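(* For every finite regular matroid $\mathcal M$ (with a fixed totally unimodular representing matrix $M$), the face poset $\mathcal{FP}(\mathcal M)$ of the Voronoi cell $V_0$ of the lattice of integer flows $\Lambda(\mathcal M)$ is isomorphic, as a graded poset, to the poset $\mathcal{SC}(\mathcal M)$ of strongly connected orientations of submatroids of $\mathcal M$. More precisely, there is an order-preserving bijection $\phi:\mathcal{FP}(\mathcal M)\to\mathcal{SC}(\mathcal M)$ such that every face $F$ satisfies $\operatorname{codim}(F)=\operatorname{genus}(\phi(F))$, equivalently $\dim F=\operatorname{genus}(\mathcal M)-\operatorname{genus}(\phi(F))$.
   Context: Let $\mathcal M$ be a regular matroid on a finite ground set $E$, represented over $\mathbb R$ by a totally unimodular (TU) matrix $M$ (every square submatrix has determinant in $\{-1,0,1\}$) whose columns $c_e$ are indexed by $e\in E$. Identify $\mathbb R^E$ with standard basis $\{e\}_{e\in E}$, Euclidean inner product $\langle\cdot,\cdot\rangle$ and norm $\|\cdot\|$. Let $\mathcal F=\mathcal F(\mathcal M)=\ker M\subseteq\mathbb R^E$ (real flows) and $\Lambda=\Lambda(\mathcal M)=\ker M\cap\mathbb Z^E$ (integer flows). For $x\in\mathbb R^E$ write $x_e=\langle x,e\rangle$ and $\operatorname{supp}(x)=\{e: x_e\neq 0\}$. $\operatorname{genus}(\mathcal M)=\dim\mathcal F$. The Voronoi cell of $\lambda\in\Lambda$ is $V_\lambda=\{x\in\mathcal F:\|x-\lambda\|\le\|x-\mu\|\ \forall\mu\in\Lambda\}$. $\mathcal{FP}(\mathcal M)$ is the set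 of nonempty faces of the polytope $V_0$ ordered by inclusion, graded by dimension; codimension is taken in $\mathcal F$. An oriented submatroid is a pair $(S,\varepsilon)$ with $S\subseteq E$ and $\varepsilon:S\to\{\pm1\}$. It is strongly connected if for every $e\in S$ there is $w\in\mathbb Z_{\ge0}^S$ with $w_e\ge1$ and $\sum_{f\in S}w_f\varepsilon_f c_f=0$ (i.e. every element lies in a positive integer flow of the reoriented submatrix). The genus of $(S,\varepsilon)$ is the dimension of the kernel of the submatrix $M_S$ of $M$ formed by the columns indexed by $S$. $\mathcal{SC}(\mathcal M)$ is the set of strongly connected oriented submatroids (including $(\emptyset,\emptyset)$), ordered by $(S,\varepsilon)\le(S',\varepsilon')$ iff $S'\subseteq S$ and $\varepsilon'=\varepsilon|_{S'}$. *)

theory Defs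
  imports "HOL-Analysis.Analysis"
begin

text \<open>Ground set E = UNIV :: 'e set (finite type), rows indexed by a finite type 'r.
  A matrix is M :: real^'e^'r; the column indexed by e is column e M.\<close>

definition sub_det :: "real^'e^'r \<Rightarrow> nat \<Rightarrow> (nat \<Rightarrow> 'r) \<Rightarrow> (nat \<Rightarrow> 'e) \<Rightarrow> real" where
  "sub_det M k f g =
     (\<Sum>p | p permutes {..<k}. of_int (sign p) * (\<Prod>i<k. M $ f i $ g (p i)))"

definition totally_unimodular :: "real^'e^'r \<Rightarrow> bool" where
  "totally_unimodular M \<longleftrightarrow>
     (\<forall>k f g. inj_on f {..<k} \<and> inj_on g {..<k} \<longrightarrow> sub_det M k f g \<in> {-1, 0, 1})"

definition real_flows :: "real^'e^'r \<Rightarrow> (real^'e) set" where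
  "real_flows M = {x. M *v x = 0}"

definition integer_flows :: "real^'e^'r \<Rightarrow> (real^'e) set" where
  "integer_flows M = {x \<in> real_flows M. \<forall>e. x $ e \<in> \<int>}"

definition voronoi_cell :: "real^'e^'r \<Rightarrow> real^'e \<Rightarrow> (real^'e) set" where
  "voronoi_cell M l = {x \<in> real_flows M. \<forall>\<mu>\<in>integer_flows M. norm (x - l) \<le> norm (x - \<mu>)}"

definition genus :: "real^'e^'r \<Rightarrow> nat" where
  "genus M = dim (real_flows M)"

definition face_poset :: "real^'e^'r \<Rightarrow> (real^'e) set set" where
  "face_poset M = {F. F face_of voronoi_cell M 0 \<and> F \<noteq> {}}"

definition oriented_submatroid :: "('e set \<times> ('e \<Rightarrow> int)) \<Rightarrow> bool" where
  "oriented_submatroid Se \<longleftrightarrow>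
     (\<forall>e\<in>fst Se. snd Se e \<in> {-1, 1}) \<and> (\<forall>e. e \<notin> fst Se \<longrightarrow> snd Se e = 0)"

definition strongly_connected :: "real^'e^'r \<Rightarrow> ('e set \<times> ('e \<Rightarrow> int)) \<Rightarrow> bool" where
  "strongly_connected M Se \<longleftrightarrow>
     (\<forall>e\<in>fst Se. \<exists>w :: 'e \<Rightarrow> int. (\<forall>f\<in>fst Se. w f \<ge> 0) \<and> w e \<ge> 1 \<and>
        (\<Sum>f\<in>fst Se. (of_int (w f * snd Se f)) *\<^sub>R column f M) = 0)"

definition SC :: "real^'e^'r \<Rightarrow> ('e set \<times> ('e \<Rightarrow> int)) set" where
  "SC M = {Se. oriented_submatroid Se \<and> strongly_connected M Se}"

definition sc_le :: "('e set \<times> ('e \<Rightarrow> int)) \<Rightarrow> ('e set \<times> ('e \<Rightarrow> int)) \<Rightarrow> bool" where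
  "sc_le Se Se' \<longleftrightarrow> fst Se' \<subseteq> fst Se \<and> (\<forall>e\<in>fst Se'. snd Se' e = snd Se e)"

text \<open>Genus of (S, eps): dimension of the kernel of the column submatrix M_S,
  realised as the flows of M supported in S.\<close>

definition sub_genus :: "real^'e^'r \<Rightarrow> ('e set \<times> ('e \<Rightarrow> int)) \<Rightarrow> nat" where
  "sub_genus M Se = dim {x. M *v x = 0 \<and> (\<forall>e. e \<notin> fst Se \<longrightarrow> x $ e = 0)}"

end

theory Submission
  imports Defs "Jordan_Normal_Form.Determinant"
begin


definition detk :: "nat \<Rightarrow> (nat \<Rightarrow> nat \<Rightarrow> real) \<Rightarrow> real" where
  "detk k A = (\<Sum>p | p permutes {..<k}. of_int (sign p) * (\<Prod>i<k. A i (p i)))"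

lemma detk_det: "detk k A = det (mat k k (\<lambda>(i,j). A i j))"
  unfolding detk_def det_def by (simp add: atLeast0LessThan)

lemma detk_cramer:
  assumes "\<forall>i<k. (\<Sum>j<k. A i j * x j) = b i" and "j < k"
  shows "detk k (\<lambda>i l. if l = j then b i else A i l) = x j * detk k A"
proof -
  let ?A = "mat k k (\<lambda>(i,j). A i j)"
  let ?x = "vec k x"
  have A: "?A \<in> carrier_mat k k" by simp
  have x: "?x \<in> carrier_vec k" by simp
  have "?A *\<^sub>v ?x = vec k b"
    using assms(1) by (auto simp: scalar_prod_def Matrix.row_def atLeast0LessThan)
  hence "replace_col ?A (?A *\<^sub>v ?x) j = mat k k (\<lambda>(i,l). if l = j then b i else A i l)"
    by (auto simp: replace_col_def)
  with cramer_lemma_mat[OF A x assms(2)] assms(2) show ?thesis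
    by (simp add: detk_det)
qed

lemma detk_nonzero:
  assumes "\<And>v. (\<forall>j<k. (\<Sum>i<k. v i * A i j) = 0) \<Longrightarrow> (\<forall>i<k. v i = 0)"
  shows "detk k A \<noteq> 0"
proof
  assume "detk k A = 0"
  let ?A = "mat k k (\<lambda>(i,j). A i j)"
  have A: "?A\<^sup>T \<in> carrier_mat k k" by simp
  have "det (?A\<^sup>T) = 0" using \<open>detk k A = 0\<close> det_transpose[of ?A k] by (simp add: detk_det)
  then obtain v where v: "v \<in> carrier_vec k" "v \<noteq> 0\<^sub>v k" "?A\<^sup>T *\<^sub>v v = 0\<^sub>v k"
    using det_0_iff_vec_prod_zero[OF A] by auto
  have "\<forall>j<k. (\<Sum>i<k. v $ i * A i j) = 0"
  proof (intro allI impI)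
    fix j assume j: "j < k"
    have "(?A\<^sup>T *\<^sub>v v) $ j = 0" using v(3) j by simp
    thus "(\<Sum>i<k. v $ i * A i j) = 0" using j v(1)
      by (simp add: scalar_prod_def Matrix.row_def atLeast0LessThan mult.commute)
  qed
  from assms[OF this] have "\<forall>i<k. v $ i = 0" .
  hence "v = 0\<^sub>v k" using v(1) by (intro eq_vecI) auto
  with v(2) show False by simp
qed




lemma sub_det_detk: "sub_det M k f g = detk k (\<lambda>i j. M $ f i $ g j)"
  unfolding sub_det_def detk_def by simp

definition suppv :: "real^'e \<Rightarrow> 'e set" where "suppv x = {e. x $ e \<noteq> 0}"

no_notation Matrix.vec_index (infixl \<open>$\<close> 100)

lemma cvec_eqI: "(\<And>i. (x::'a^'b) $ i = y $ i) \<Longrightarrow> x = y"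
  by (simp add: Finite_Cartesian_Product.vec_eq_iff)

lemma mv_neg: "(M::real^'n^'m) *v (- x) = - (M *v x)"
  using matrix_vector_mult_scaleR[of M "-1" x] by simp

lemma mult_vec_sum: "(M *v x) $ r = (\<Sum>e\<in>UNIV. M $ r $ e * x $ e)"
  by (simp add: matrix_vector_mult_def)

lemma flow_no_small:
  fixes M :: "real^'e::finite^'r::finite" and z w :: "real^'e"
  assumes flow: "M *v w = 0" and w0: "w \<noteq> 0"
    and conf: "\<forall>e. w $ e = 0 \<or> sgn (w $ e) = sgn (z $ e)"
    and minimal: "\<And>w'. M *v w' = 0 \<Longrightarrow> w' \<noteq> 0 \<Longrightarrow> (\<forall>e. w' $ e = 0 \<or> sgn (w' $ e) = sgn (z $ e))
                  \<Longrightarrow> card (suppv w) \<le> card (suppv w')"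
    and e0: "e0 \<in> suppv w"
    and vflow: "M *v v = 0" and vsupp: "\<forall>e. e \<notin> suppv w - {e0} \<longrightarrow> v $ e = 0"
  shows "v = 0"
proof (rule ccontr)
  assume "v \<noteq> 0"
  then obtain e1 where e1: "v $ e1 \<noteq> 0" by (metis Finite_Cartesian_Product.vec_eq_iff zero_index)
  with vsupp have e1s: "e1 \<in> suppv w" "e1 \<noteq> e0" by auto
  define v' where "v' = (if v $ e1 * w $ e1 > 0 then v else - v)"
  have v'flow: "M *v v' = 0" using vflow by (simp add: v'_def mv_neg)
  have v'suppv: "\<forall>e. e \<notin> suppv w - {e0} \<longrightarrow> v' $ e = 0" using vsupp by (simp add: v'_def)
  have e1pos: "v' $ e1 / w $ e1 > 0"
    using e1 e1s by (auto simp: v'_def suppv_def divide_pos_pos zero_less_mult_iff zero_less_divide_iff)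
  define T where "T = {e \<in> suppv w. v' $ e / w $ e > 0}"
  have T: "finite T" "T \<noteq> {}" using e1pos e1s by (auto simp: T_def)
  define t where "t = Min ((\<lambda>e. w $ e / v' $ e) ` T)"
  have "t \<in> (\<lambda>e. w $ e / v' $ e) ` T" unfolding t_def using T by (intro Min_in) auto
  then obtain e2 where e2: "e2 \<in> T" "t = w $ e2 / v' $ e2" by auto
  have tle: "\<And>e. e \<in> T \<Longrightarrow> t \<le> w $ e / v' $ e" unfolding t_def using T by auto
  define w' where "w' = w - t *\<^sub>R v'"
  have w'flow: "M *v w' = 0" using flow v'flow
    by (simp add: w'_def matrix_vector_mult_diff_distrib matrix_vector_mult_scaleR)
  have w'e0: "w' $ e0 = w $ e0" using v'suppv by (simp add: w'_def)
  hence w'0: "w' \<noteq> 0" using e0 by (auto simp: suppv_def)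
  have fac: "w' $ e = w $ e * (1 - t * (v' $ e / w $ e))" if "w $ e \<noteq> 0" for e
    using that by (simp add: w'_def field_simps)
  have conf': "\<forall>e. w' $ e = 0 \<or> sgn (w' $ e) = sgn (z $ e)"
  proof
    fix e
    show "w' $ e = 0 \<or> sgn (w' $ e) = sgn (z $ e)"
    proof (cases "w $ e = 0")
      case True
      hence "v' $ e = 0" using v'suppv by (auto simp: suppv_def)
      thus ?thesis using True by (simp add: w'_def)
    next
      case False
      have "1 - t * (v' $ e / w $ e) \<ge> 0"
      proof (cases "e \<in> T")
        case True
        from tle[OF True] True have "t * (v' $ e / w $ e) \<le> (w $ e / v' $ e) * (v' $ e / w $ e)"
          by (intro mult_right_mono) (auto simp: T_def)
        also have "\<dots> = 1" using True False by (auto simp: T_def)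
        finally show ?thesis by simp
      next
        case nT: False
        have "t > 0" using e2 by (auto simp: T_def zero_less_divide_iff divide_less_0_iff)
        moreover have "v' $ e / w $ e \<le> 0" using nT False by (auto simp: T_def suppv_def)
        ultimately have "t * (v' $ e / w $ e) \<le> 0" using mult_nonneg_nonpos[of t "v' $ e / w $ e"] by linarith
        thus ?thesis by simp
      qed
      then have "w' $ e = 0 \<or> sgn (w' $ e) = sgn (w $ e)"
      proof (cases "1 - t * (v' $ e / w $ e) = 0")
        case True thus ?thesis using fac[OF False] by simp
      next
        case c: False
        assume "1 - t * (v' $ e / w $ e) \<ge> 0"
        with c have "1 - t * (v' $ e / w $ e) > 0" by linarith
        hence "sgn (1 - t * (v' $ e / w $ e)) = 1" by (rule sgn_pos)
        thus ?thesis using fac[OF False] by (simp only: sgn_mult) simp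
      qed
      thus ?thesis using conf False by metis
    qed
  qed
  have "suppv w' \<subseteq> suppv w - {e2}"
  proof
    fix e assume "e \<in> suppv w'"
    hence "w' $ e \<noteq> 0" by (simp add: suppv_def)
    moreover have "w $ e = 0 \<Longrightarrow> w' $ e = 0"
      using v'suppv by (auto simp: w'_def suppv_def)
    moreover have "w' $ e2 = 0" using e2 by (auto simp: w'_def T_def suppv_def)
    ultimately show "e \<in> suppv w - {e2}" by (auto simp: suppv_def)
  qed
  hence "card (suppv w') < card (suppv w)"
    using e2 by (intro psubset_card_mono) (auto simp: T_def)
  with minimal[OF w'flow w'0 conf'] show False by simp
qed




lemma flow_eq_sum: "(M *v w) $ r = (\<Sum>e\<in>suppv w. M $ r $ e * w $ e)"
  unfolding mult_vec_sum suppv_def by (rule sum.mono_neutral_right) auto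

lemma equal_magnitudes:
  fixes M :: "real^'e::finite^'r::finite" and z w :: "real^'e"
  assumes TU: "totally_unimodular M"
    and flow: "M *v w = 0"
    and small: "\<And>v. M *v v = 0 \<Longrightarrow> \<forall>e. e \<notin> suppv w - {e0} \<longrightarrow> v $ e = 0 \<Longrightarrow> v = 0"
    and e0: "e0 \<in> suppv w" and e: "e \<in> suppv w"
  shows "\<bar>w $ e\<bar> = \<bar>w $ e0\<bar>"
proof (cases "e = e0")
  case True thus ?thesis by simp
next
  case False
  define B where "B = suppv w - {e0}"
  define k where "k = card B"
  have finB: "finite B" by simp
  obtain g where g: "bij_betw g {..<k} B"
    using ex_bij_betw_nat_finite[OF finB] unfolding k_def atLeast0LessThan by blast
  define \<rho> where "\<rho> r = (\<chi> e. if e \<in> B then M $ r $ e else 0)" for r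
  define Y where "Y = {y::real^'e. \<forall>e. e \<notin> B \<longrightarrow> y $ e = 0}"
  have subY: "subspace Y" unfolding Y_def subspace_def by auto
  have QY: "range \<rho> \<subseteq> Y" by (auto simp: Y_def \<rho>_def)
  have spanQ: "span (range \<rho>) = Y"
  proof
    show "span (range \<rho>) \<subseteq> Y" using QY subY by (simp add: span_minimal)
    show "Y \<subseteq> span (range \<rho>)"
    proof
      fix y assume y: "y \<in> Y"
      obtain p q where p: "p \<in> span (range \<rho>)" and q: "\<And>u. u \<in> span (range \<rho>) \<Longrightarrow> real_inner_class.orthogonal q u"
        and ypq: "y = p + q"
        using orthogonal_subspace_decomp_exists[of "range \<rho>" y] by blast
      have pY: "p \<in> Y" using p QY subY by (meson span_minimal subsetD)
      have qY: "q \<in> Y" using y pY subY ypq by (metis add_diff_cancel_left' subspace_diff)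
      have "M *v q = 0"
      proof (rule cvec_eqI)
        fix r
        have "real_inner_class.orthogonal q (\<rho> r)" using q span_base[of "\<rho> r" "range \<rho>"] by auto
        hence "0 = (\<Sum>e\<in>UNIV. q $ e * (if e \<in> B then M $ r $ e else 0))"
          by (simp add: real_inner_class.orthogonal_def inner_vec_def \<rho>_def)
        also have "\<dots> = (\<Sum>e\<in>UNIV. M $ r $ e * q $ e)"
          using qY by (intro sum.cong) (auto simp: Y_def)
        finally show "(M *v q) $ r = 0 $ r" by (simp add: mult_vec_sum)
      qed
      with small[of q] qY have "q = 0" by (auto simp: Y_def B_def)
      thus "y \<in> span (range \<rho>)" using ypq p by simp
    qed
  qed
  obtain Q where Q: "Q \<subseteq> range \<rho>" "independent Q" "range \<rho> \<subseteq> span Q"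
    using maximal_independent_subset[of "range \<rho>"] by blast
  have spanQ': "span Q = Y"
    using Q spanQ by (metis span_mono span_span subset_antisym)
  define Ax where "Ax = (\<lambda>e. axis e (1::real)) ` B"
  have indAx: "independent Ax"
  proof -
    have "Ax \<subseteq> Basis" by (auto simp: Ax_def Basis_vec_def cart_eq_inner_axis)
    thus ?thesis using independent_Basis independent_mono by blast
  qed
  have cardAx: "card Ax = k"
    unfolding Ax_def k_def by (rule card_image) (auto simp: inj_on_def axis_eq_axis)
  have spanAx: "span Ax = Y"
  proof
    show "span Ax \<subseteq> Y" using subY by (intro span_minimal) (auto simp: Ax_def Y_def axis_def)
    show "Y \<subseteq> span Ax"
    proof
      fix y assume y: "y \<in> Y"
      have "y = (\<Sum>e\<in>B. y $ e *\<^sub>R axis e 1)"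
      proof (rule cvec_eqI)
        fix i
        show "y $ i = (\<Sum>e\<in>B. y $ e *\<^sub>R axis e 1) $ i"
          using y by (cases "i \<in> B") (auto simp: Y_def axis_def sum_component if_distrib sum.delta cong: if_cong)
      qed
      also have "\<dots> \<in> span Ax" by (intro span_sum span_scale span_base) (auto simp: Ax_def)
      finally show "y \<in> span Ax" .
    qed
  qed
  have cardQ: "card Q = k"
  proof -
    have "dim Y = card Ax" using dim_span_eq_card_independent[OF indAx] spanAx by simp
    moreover have "dim Y = card Q" using dim_span_eq_card_independent[OF Q(2)] spanQ' by simp
    ultimately show ?thesis using cardAx by simp
  qed
  have finQ: "finite Q" using Q(2) by (simp add: independent_imp_finite)
  obtain g' where g': "bij_betw g' {..<k} Q"
    using ex_bij_betw_nat_finite[OF finQ] unfolding cardQ atLeast0LessThan by blast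
  define f where "f i = (SOME r. \<rho> r = g' i)" for i
  have \<rho>f: "\<rho> (f i) = g' i" if "i < k" for i
  proof -
    have "g' i \<in> range \<rho>" using g' that Q(1) by (auto simp: bij_betw_def)
    thus ?thesis unfolding f_def by (metis (mono_tags, lifting) imageE someI)
  qed
  have finj: "inj_on f {..<k}"
  proof (rule inj_onI)
    fix i j assume "i \<in> {..<k}" "j \<in> {..<k}" "f i = f j"
    hence "g' i = g' j" using \<rho>f by (metis lessThan_iff)
    thus "i = j" using g' \<open>i \<in> {..<k}\<close> \<open>j \<in> {..<k}\<close> by (auto simp: bij_betw_def inj_on_def)
  qed
  have ginj: "inj_on g {..<k}" using g by (simp add: bij_betw_def)
  define A where "A i j = M $ f i $ g j" for i j
  have Adet: "detk k A \<noteq> 0"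
  proof (rule detk_nonzero)
    fix v assume v: "\<forall>j<k. (\<Sum>i<k. v i * A i j) = 0"
    have "(\<Sum>i<k. v i *\<^sub>R g' i) = 0"
    proof (rule cvec_eqI)
      fix e
      have "(\<Sum>i<k. v i *\<^sub>R g' i) $ e = (\<Sum>i<k. v i * (\<rho> (f i)) $ e)"
        by (simp add: sum_component \<rho>f)
      also have "\<dots> = 0"
      proof (cases "e \<in> B")
        case True
        then obtain j where j: "j < k" "g j = e" using g by (auto simp: bij_betw_def)
        have "(\<Sum>i<k. v i * (\<rho> (f i)) $ e) = (\<Sum>i<k. v i * A i j)"
          using True j by (simp add: \<rho>_def A_def)
        thus ?thesis using v j by simp
      next
        case False thus ?thesis by (simp add: \<rho>_def)
      qed
      finally show "(\<Sum>i<k. v i *\<^sub>R g' i) $ e = 0 $ e" by simp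
    qed
    hence "(\<Sum>q\<in>Q. v (the_inv_into {..<k} g' q) *\<^sub>R q) = 0"
      by (subst sum.reindex_bij_betw[OF g', symmetric])
         (simp add: the_inv_into_f_f[OF bij_betw_imp_inj_on[OF g']])
    moreover have ind: "\<forall>c. (\<Sum>u\<in>Q. c u *\<^sub>R u) = 0 \<longrightarrow> (\<forall>u\<in>Q. c u = 0)"
      using Q(2) unfolding independent_explicit by blast
    ultimately have "\<forall>q\<in>Q. v (the_inv_into {..<k} g' q) = 0"
      using spec[OF ind, of "\<lambda>q. v (the_inv_into {..<k} g' q)"] by blast
    thus "\<forall>i<k. v i = 0"
      using g' by (auto simp: bij_betw_def the_inv_into_f_f)
  qed
  have Apm: "detk k A = 1 \<or> detk k A = -1"
  proof -
    have "sub_det M k f g \<in> {-1, 0, 1}" using TU finj ginj unfolding totally_unimodular_def by blast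
    moreover have "(\<lambda>i j. M $ f i $ g j) = A" by (simp add: A_def fun_eq_iff)
    ultimately show ?thesis using Adet by (auto simp: sub_det_detk)
  qed
  have eB: "e \<in> B" using e False by (simp add: B_def)
  then obtain j where j: "j < k" "g j = e" using g by (auto simp: bij_betw_def)
  have w0: "w $ e0 \<noteq> 0" using e0 by (simp add: suppv_def)
  define x where "x j = - w $ g j / w $ e0" for j
  define b where "b i = M $ f i $ e0" for i
  have sys: "\<forall>i<k. (\<Sum>j<k. A i j * x j) = b i"
  proof (intro allI impI)
    fix i assume "i < k"
    have "0 = (M *v w) $ f i" using flow by simp
    also have "\<dots> = (\<Sum>e\<in>insert e0 B. M $ f i $ e * w $ e)"
      unfolding flow_eq_sum using e0 by (simp add: B_def insert_absorb)
    also have "\<dots> = M $ f i $ e0 * w $ e0 + (\<Sum>e\<in>B. M $ f i $ e * w $ e)"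
      by (rule sum.insert) (auto simp: B_def)
    also have "(\<Sum>e\<in>B. M $ f i $ e * w $ e) = (\<Sum>j<k. M $ f i $ g j * w $ g j)"
      using sum.reindex_bij_betw[OF g, of "\<lambda>e. M $ f i $ e * w $ e"] by simp
    finally have "(\<Sum>j<k. M $ f i $ g j * w $ g j) = - (M $ f i $ e0 * w $ e0)" by linarith
    hence "(\<Sum>j<k. M $ f i $ g j * w $ g j) / (- w $ e0) = M $ f i $ e0"
      using w0 by simp
    thus "(\<Sum>j<k. A i j * x j) = b i"
      by (simp add: A_def x_def b_def sum_divide_distrib sum_negf)
  qed
  have cr: "detk k (\<lambda>i l. if l = j then b i else A i l) = x j * detk k A"
    by (rule detk_cramer[OF sys j(1)])
  have g2inj: "inj_on (g(j := e0)) {..<k}"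
  proof -
    have "e0 \<notin> g ` ({..<k} - {j})" using g by (auto simp: bij_betw_def B_def)
    thus ?thesis using ginj j(1)
      by (auto simp: inj_on_def)
  qed
  have "sub_det M k f (g(j := e0)) \<in> {-1, 0, 1}" using TU finj g2inj unfolding totally_unimodular_def by blast
  moreover have "sub_det M k f (g(j := e0)) = detk k (\<lambda>i l. if l = j then b i else A i l)"
    unfolding sub_det_detk by (rule arg_cong[where f="detk k"]) (auto simp: A_def b_def fun_eq_iff)
  ultimately have xj: "x j * detk k A \<in> {-1, 0, 1}" using cr by simp
  have "w $ e \<noteq> 0" using e by (simp add: suppv_def)
  hence "x j \<noteq> 0" using w0 j by (simp add: x_def)
  with xj Apm have "\<bar>x j\<bar> = 1" by auto
  thus ?thesis using j w0 by (simp add: x_def abs_div)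
qed




lemma conformal_circuit:
  fixes M :: "real^'e::finite^'r::finite"
  assumes TU: "totally_unimodular M" and zf: "M *v z = 0" and z0: "z \<noteq> 0"
  shows "\<exists>d. M *v d = 0 \<and> d \<noteq> 0 \<and> (\<forall>e. d $ e = 0 \<or> d $ e = sgn (z $ e))"
proof -
  define P where "P w \<longleftrightarrow> M *v w = 0 \<and> w \<noteq> 0 \<and> (\<forall>e. w $ e = 0 \<or> sgn (w $ e) = sgn (z $ e))" for w
  have "P z" using zf z0 by (simp add: P_def)
  then obtain w where Pw: "P w" and min: "\<And>y. P y \<Longrightarrow> card (suppv w) \<le> card (suppv y)"
    using ex_has_least_nat[of P z "\<lambda>w. card (suppv w)"] by blast
  have wf: "M *v w = 0" and w0: "w \<noteq> 0" and wc: "\<forall>e. w $ e = 0 \<or> sgn (w $ e) = sgn (z $ e)"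
    using Pw by (auto simp: P_def)
  obtain e0 where e0: "e0 \<in> suppv w" using w0 by (metis (mono_tags) cvec_eqI mem_Collect_eq suppv_def zero_index)
  have mag: "\<bar>w $ e\<bar> = \<bar>w $ e0\<bar>" if "e \<in> suppv w" for e
  proof (rule equal_magnitudes[OF TU wf _ e0 that])
    fix v assume "M *v v = 0" "\<forall>e. e \<notin> suppv w - {e0} \<longrightarrow> v $ e = 0"
    thus "v = 0" using flow_no_small[OF wf w0 wc _ e0] min by (auto simp: P_def)
  qed
  define m where "m = \<bar>w $ e0\<bar>"
  have m0: "m > 0" using e0 by (simp add: m_def suppv_def)
  define d where "d = (1 / m) *\<^sub>R w"
  have "M *v d = 0" using wf by (simp add: d_def matrix_vector_mult_scaleR)
  moreover have "d \<noteq> 0" using w0 m0 by (simp add: d_def)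
  moreover have "\<forall>e. d $ e = 0 \<or> d $ e = sgn (z $ e)"
  proof
    fix e
    show "d $ e = 0 \<or> d $ e = sgn (z $ e)"
    proof (cases "w $ e = 0")
      case True thus ?thesis by (simp add: d_def)
    next
      case False
      hence "\<bar>w $ e\<bar> = m" using mag by (simp add: suppv_def m_def)
      hence "d $ e = sgn (w $ e)" using False m0
        by (cases "w $ e > 0") (auto simp: d_def sgn_if abs_if split: if_splits)
      thus ?thesis using wc False by metis
    qed
  qed
  ultimately show ?thesis by blast
qed

definition Gf :: "real^'e \<Rightarrow> real^'e \<Rightarrow> real" where
  "Gf x y = inner y y - 2 * inner x y"

lemma norm_Gf: "(norm (x - y))\<^sup>2 = (norm x)\<^sup>2 + Gf x y"
  by (simp add: Gf_def power2_norm_eq_inner inner_diff_left inner_diff_right inner_commute)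

lemma Gf_add: "Gf x (a + b) = Gf x a + Gf x b + 2 * inner a b"
  by (simp add: Gf_def inner_add_left inner_add_right inner_commute algebra_simps)

lemma Gf_shift: "Gf x (l + y) = Gf x l + Gf (x - l) y"
  by (simp add: Gf_def inner_add_left inner_add_right inner_diff_left inner_commute algebra_simps)

lemma Gf_affine: "Gf (x + t *\<^sub>R (x - y)) l = (1 + t) * Gf x l - t * Gf y l"
  by (simp add: Gf_def inner_add_left inner_diff_left algebra_simps)

lemma voronoi_iff:
  "x \<in> voronoi_cell M 0 \<longleftrightarrow> x \<in> real_flows M \<and> (\<forall>\<mu>\<in>integer_flows M. Gf x \<mu> \<ge> 0)"
proof -
  have "norm x \<le> norm (x - \<mu>) \<longleftrightarrow> Gf x \<mu> \<ge> 0" for \<mu>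
  proof -
    have "norm x \<le> norm (x - \<mu>) \<longleftrightarrow> (norm x)\<^sup>2 \<le> (norm (x - \<mu>))\<^sup>2"
      by (simp add: abs_le_square_iff[symmetric])
    thus ?thesis by (simp add: norm_Gf)
  qed
  thus ?thesis by (auto simp: voronoi_cell_def)
qed

lemma sgn_cases: "sgn (x::real) \<in> {-1, 0, 1}" by (simp add: sgn_if)

definition l1 :: "real^'e \<Rightarrow> real" where "l1 y = (\<Sum>e\<in>UNIV. \<bar>y $ e\<bar>)"

lemma int_flow_step:
  fixes M :: "real^'e::finite^'r::finite"
  assumes TU: "totally_unimodular M" and l: "l \<in> integer_flows M" and l0: "l \<noteq> 0"
  shows "\<exists>d. d \<in> integer_flows M \<and> d \<noteq> 0 \<and> (\<forall>e. d $ e = 0 \<or> d $ e = sgn (l $ e)) \<and>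
             l - d \<in> integer_flows M \<and> l1 (l - d) + 1 \<le> l1 l \<and> inner (l - d) d \<ge> 0 \<and>
             (\<forall>e. (l - d) $ e = 0 \<or> sgn ((l - d) $ e) = sgn (l $ e))"
proof -
  have lf: "M *v l = 0" and li: "\<forall>e. l $ e \<in> \<int>" using l by (auto simp: integer_flows_def real_flows_def)
  obtain d where df: "M *v d = 0" and d0: "d \<noteq> 0" and dc: "\<forall>e. d $ e = 0 \<or> d $ e = sgn (l $ e)"
    using conformal_circuit[OF TU lf l0] by blast
  have di: "d \<in> integer_flows M"
    using df dc by (auto simp: integer_flows_def real_flows_def sgn_if) (metis Ints_0 Ints_1 Ints_minus)
  have ldi: "l - d \<in> integer_flows M"
    using l di by (auto simp: integer_flows_def real_flows_def matrix_vector_mult_diff_distrib Ints_diff)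
  have ge1: "\<bar>l $ e\<bar> \<ge> 1" if "l $ e \<noteq> 0" for e
  proof -
    obtain n where "l $ e = of_int n" using li by (metis Ints_cases)
    thus ?thesis using that by simp
  qed
  have tm: "\<bar>(l - d) $ e\<bar> + \<bar>d $ e\<bar> = \<bar>l $ e\<bar> \<and> (l - d) $ e * d $ e \<ge> 0 \<and>
      ((l - d) $ e = 0 \<or> sgn ((l - d) $ e) = sgn (l $ e))" for e
  proof (cases "d $ e = 0")
    case True thus ?thesis by simp
  next
    case False
    hence de: "d $ e = sgn (l $ e)" and le: "l $ e \<noteq> 0" using dc by (metis sgn_0)+
    have g1: "\<bar>l $ e\<bar> \<ge> 1" using ge1[OF le] .
    show ?thesis
    proof (cases "l $ e > 0")
      case True thus ?thesis using de g1 by (auto simp: sgn_if)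
    next
      case False thus ?thesis using de g1 le by (auto simp: sgn_if)
    qed
  qed
  obtain e1 where e1: "d $ e1 \<noteq> 0" using d0 by (metis cvec_eqI zero_index)
  have "l1 (l - d) + l1 d = l1 l"
    unfolding l1_def sum.distrib[symmetric] using tm by (intro sum.cong) auto
  moreover have "l1 d \<ge> 1"
  proof -
    have "\<bar>d $ e1\<bar> = 1" using dc[rule_format, of e1] e1 by (auto simp: sgn_if split: if_splits)
    moreover have "\<bar>d $ e1\<bar> \<le> l1 d" unfolding l1_def by (rule member_le_sum) auto
    ultimately show ?thesis by simp
  qed
  moreover have "inner (l - d) d \<ge> 0"
    unfolding inner_vec_def using tm by (intro sum_nonneg) (simp add: mult.commute)
  moreover have "\<forall>e. (l - d) $ e = 0 \<or> sgn ((l - d) $ e) = sgn (l $ e)" using tm by blast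
  ultimately show ?thesis using di d0 dc ldi by (intro exI[of _ d]) auto
qed

lemma l1_nonneg: "l1 y \<ge> 0" unfolding l1_def by (intro sum_nonneg) auto

lemma int_induct_l1[consumes 1, case_names step]:
  fixes M :: "real^'e::finite^'r::finite"
  assumes lin: "l \<in> integer_flows M"
  and step: "\<And>l. l \<in> integer_flows M \<Longrightarrow> (\<And>l'. l' \<in> integer_flows M \<Longrightarrow> l1 l' + 1 \<le> l1 l \<Longrightarrow> P l') \<Longrightarrow> P l"
  shows "P l"
proof -
  have "\<forall>l. l \<in> integer_flows M \<longrightarrow> l1 l \<le> real n \<longrightarrow> P l" for n
  proof (induction n)
    case 0
    show ?case
    proof (intro allI impI)
      fix l assume l: "l \<in> integer_flows M" "l1 l \<le> real 0"
      show "P l" using l(1)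
      proof (rule step)
        fix l' assume "l' \<in> integer_flows M" "l1 l' + 1 \<le> l1 l"
        with l1_nonneg[of l'] l(2) show "P l'" by simp
      qed
    qed
  next
    case (Suc n)
    show ?case
    proof (intro allI impI)
      fix l assume l: "l \<in> integer_flows M" "l1 l \<le> real (Suc n)"
      show "P l" using l(1)
      proof (rule step)
        fix l' assume "l' \<in> integer_flows M" "l1 l' + 1 \<le> l1 l"
        thus "P l'" using Suc.IH l(2) by auto
      qed
    qed
  qed
  moreover obtain n where "l1 l \<le> real n" using real_arch_simple by blast
  ultimately show "P l" using lin by blast
qed

definition Rset :: "real^'e^'r \<Rightarrow> (real^'e) set" where
  "Rset M = {d \<in> integer_flows M. \<forall>e. d $ e \<in> {-1, 0, 1}}"

lemma voronoi_via_R: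
  fixes M :: "real^'e::finite^'r::finite"
  assumes TU: "totally_unimodular M" and xf: "x \<in> real_flows M"
    and R: "\<And>d. d \<in> Rset M \<Longrightarrow> Gf x d \<ge> 0"
  shows "x \<in> voronoi_cell M 0"
proof -
  have "Gf x l \<ge> 0" if "l \<in> integer_flows M" for l
    using that
  proof (induction l rule: int_induct_l1)
    case (step l)
    show ?case
    proof (cases "l = 0")
      case True thus ?thesis by (simp add: Gf_def)
    next
      case False
      then obtain d where d: "d \<in> integer_flows M" "\<forall>e. d $ e = 0 \<or> d $ e = sgn (l $ e)"
        "l - d \<in> integer_flows M" "l1 (l - d) + 1 \<le> l1 l" "inner (l - d) d \<ge> 0"
        using int_flow_step[OF TU step(1)] by blast
      have "\<forall>e. d $ e \<in> {-1, 0, 1}"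
      proof
        fix e show "d $ e \<in> {-1, 0, 1}" using d(2)[rule_format, of e] sgn_cases[of "l $ e"] by auto
      qed
      hence "d \<in> Rset M" using d(1) unfolding Rset_def by blast
      hence "Gf x d \<ge> 0" by (rule R)
      moreover have "Gf x (l - d) \<ge> 0" using step(2)[OF d(3,4)] .
      moreover have "l = (l - d) + d" by simp
      ultimately show ?thesis using Gf_add[of x "l - d" d] d(5) by simp
    qed
  qed
  thus ?thesis using xf voronoi_iff by blast
qed

lemma unit_entries:
  fixes M :: "real^'e::finite^'r::finite"
  assumes TU: "totally_unimodular M" and nonneg: "\<And>y. y \<in> integer_flows M \<Longrightarrow> Gf x y \<ge> 0"
  shows "\<delta> \<in> integer_flows M \<Longrightarrow> Gf x \<delta> = 0 \<Longrightarrow> \<forall>e. \<delta> $ e \<in> {-1, 0, 1}"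
proof (induction \<delta> rule: int_induct_l1)
  case (step l)
  show ?case
  proof (cases "l = 0")
    case True thus ?thesis by simp
  next
    case False
    then obtain d where d: "d \<in> integer_flows M" "\<forall>e. d $ e = 0 \<or> d $ e = sgn (l $ e)"
      "l - d \<in> integer_flows M" "l1 (l - d) + 1 \<le> l1 l" "inner (l - d) d \<ge> 0"
      "\<forall>e. (l - d) $ e = 0 \<or> sgn ((l - d) $ e) = sgn (l $ e)"
      using int_flow_step[OF TU step(1)] by blast
    have "Gf x l = Gf x (l - d) + Gf x d + 2 * inner (l - d) d"
      using Gf_add[of x "l - d" d] by simp
    moreover have "Gf x (l - d) \<ge> 0" "Gf x d \<ge> 0" using nonneg d(1,3) by auto
    ultimately have z: "Gf x (l - d) = 0" "inner (l - d) d = 0" using step(3) d(5) by linarith+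
    have IH: "\<forall>e. (l - d) $ e \<in> {-1, 0, 1}" using step(2)[OF d(3,4) z(1)] .
    have tn: "\<forall>e. (l - d) $ e * d $ e \<ge> 0"
    proof
      fix e show "(l - d) $ e * d $ e \<ge> 0"
      proof (cases "d $ e = 0 \<or> (l - d) $ e = 0")
        case True thus ?thesis by auto
      next
        case False
        hence "d $ e = sgn ((l - d) $ e)" using d(2)[rule_format, of e] d(6)[rule_format, of e] by auto
        hence "(l - d) $ e * d $ e = \<bar>(l - d) $ e\<bar>" by (simp only: abs_sgn)
        thus ?thesis by simp
      qed
    qed
    have tz: "(l - d) $ e * d $ e = 0" for e
    proof -
      have "(\<Sum>e\<in>UNIV. (l - d) $ e * d $ e) = 0" using z(2) by (simp add: inner_vec_def)
      thus ?thesis using tn sum_nonneg_eq_0_iff[of UNIV "\<lambda>e. (l - d) $ e * d $ e"] by auto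
    qed
    show ?thesis
    proof
      fix e
      have "l $ e = (l - d) $ e + d $ e" by simp
      show "l $ e \<in> {-1, 0, 1}"
      proof (cases "d $ e = 0")
        case True thus ?thesis using IH[rule_format, of e] by simp
      next
        case False
        hence "(l - d) $ e = 0" using tz[of e] by simp
        hence "l $ e = d $ e" by simp
        moreover have "d $ e \<in> {-1, 0, 1}" using d(2)[rule_format, of e] sgn_cases[of "l $ e"] by auto
        ultimately show ?thesis by simp
      qed
    qed
  qed
qed




definition Nx :: "real^'e^'r \<Rightarrow> real^'e \<Rightarrow> (real^'e) set" where
  "Nx M x = {l \<in> integer_flows M. Gf x l = 0}"

definition Sof :: "(real^'e) set \<Rightarrow> 'e set" where
  "Sof N = {e. \<exists>l\<in>N. l $ e \<noteq> 0}"

definition epsof :: "(real^'e) set \<Rightarrow> 'e \<Rightarrow> int" where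
  "epsof N e = (if \<exists>l\<in>N. l $ e = 1 then 1 else if \<exists>l\<in>N. l $ e = -1 then -1 else 0)"

definition Dset :: "real^'e^'r \<Rightarrow> ('e \<Rightarrow> int) \<Rightarrow> (real^'e) set" where
  "Dset M \<epsilon> = {l \<in> integer_flows M. \<forall>e. l $ e = 0 \<or> l $ e = of_int (\<epsilon> e)}"

lemma intf_add: "a \<in> integer_flows M \<Longrightarrow> b \<in> integer_flows M \<Longrightarrow> a + b \<in> integer_flows M"
  by (auto simp: integer_flows_def real_flows_def matrix_vector_right_distrib Ints_add)

lemma intf_diff: "a \<in> integer_flows M \<Longrightarrow> b \<in> integer_flows M \<Longrightarrow> a - b \<in> integer_flows M"
  by (auto simp: integer_flows_def real_flows_def matrix_vector_mult_diff_distrib Ints_diff)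

lemma intf_0: "0 \<in> integer_flows M"
  by (auto simp: integer_flows_def real_flows_def)

lemma N_diff:
  fixes M :: "real^'e::finite^'r::finite"
  assumes TU: "totally_unimodular M" and x: "x \<in> voronoi_cell M 0"
    and l: "l \<in> Nx M x" and m: "m \<in> Nx M x"
  shows "\<forall>e. (m - l) $ e \<in> {-1, 0, 1}"
proof -
  have xn: "\<And>y. y \<in> integer_flows M \<Longrightarrow> Gf x y \<ge> 0" using x voronoi_iff by blast
  have li: "l \<in> integer_flows M" and l0: "Gf x l = 0" using l by (auto simp: Nx_def)
  have mi: "m \<in> integer_flows M" and m0: "Gf x m = 0" using m by (auto simp: Nx_def)
  have nn: "Gf (x - l) y \<ge> 0" if "y \<in> integer_flows M" for y
    using Gf_shift[of x l y] l0 xn[OF intf_add[OF li that]] by simp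
  have "Gf (x - l) (m - l) = 0" using Gf_shift[of x l "m - l"] l0 m0 by simp
  thus ?thesis using unit_entries[OF TU nn intf_diff[OF mi li]] by blast
qed

lemma N_unit:
  fixes M :: "real^'e::finite^'r::finite"
  assumes TU: "totally_unimodular M" and x: "x \<in> voronoi_cell M 0" and m: "m \<in> Nx M x"
  shows "\<forall>e. m $ e \<in> {-1, 0, 1}"
proof -
  have "0 \<in> Nx M x" by (simp add: Nx_def intf_0 Gf_def)
  thus ?thesis using N_diff[OF TU x _ m] by fastforce
qed

lemma N_sign:
  fixes M :: "real^'e::finite^'r::finite"
  assumes TU: "totally_unimodular M" and x: "x \<in> voronoi_cell M 0"
    and l: "l \<in> Nx M x" and m: "m \<in> Nx M x" and le: "l $ e \<noteq> 0" and me: "m $ e \<noteq> 0"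
  shows "m $ e = l $ e"
  using N_diff[OF TU x l m] N_unit[OF TU x l] N_unit[OF TU x m] le me
  by (auto dest!: spec[of _ e])

lemma epsof_val:
  fixes M :: "real^'e::finite^'r::finite"
  assumes TU: "totally_unimodular M" and x: "x \<in> voronoi_cell M 0"
    and N: "N \<subseteq> Nx M x" and l: "l \<in> N" and le: "l $ e \<noteq> 0"
  shows "of_int (epsof N e) = l $ e"
proof -
  have lu: "l $ e \<in> {-1, 0, 1}" using N_unit[OF TU x] N l by blast
  have same: "\<And>m. m \<in> N \<Longrightarrow> m $ e \<noteq> 0 \<Longrightarrow> m $ e = l $ e"
    using N_sign[OF TU x] N l le by blast
  show ?thesis
  proof (cases "l $ e = 1")
    case True thus ?thesis using l by (auto simp: epsof_def)
  next
    case False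
    hence "l $ e = -1" using lu le by auto
    moreover have "\<not> (\<exists>m\<in>N. m $ e = 1)" using same \<open>l $ e = -1\<close> by force
    ultimately show ?thesis using l by (auto simp: epsof_def)
  qed
qed

lemma epsof_zero: "e \<notin> Sof N \<Longrightarrow> epsof N e = 0"
  by (auto simp: epsof_def Sof_def)

lemma epsof_range: "epsof N e \<in> {-1, 0, 1}"
  by (auto simp: epsof_def)

definition confv :: "('e \<Rightarrow> int) \<Rightarrow> real^'e \<Rightarrow> bool" where
  "confv \<epsilon> y \<longleftrightarrow> (\<forall>e. y $ e = 0 \<or> sgn (y $ e) = of_int (\<epsilon> e))"

lemma cone_nonneg:
  fixes M :: "real^'e::finite^'r::finite"
  assumes TU: "totally_unimodular M"
    and D: "\<And>d. d \<in> Dset M \<epsilon> \<Longrightarrow> inner a d \<ge> 0"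
  shows "y \<in> integer_flows M \<Longrightarrow> confv \<epsilon> y \<Longrightarrow> inner a y \<ge> 0"
proof (induction y rule: int_induct_l1)
  case (step l)
  show ?case
  proof (cases "l = 0")
    case True thus ?thesis by simp
  next
    case False
    then obtain d where d: "d \<in> integer_flows M" "\<forall>e. d $ e = 0 \<or> d $ e = sgn (l $ e)"
      "l - d \<in> integer_flows M" "l1 (l - d) + 1 \<le> l1 l"
      "\<forall>e. (l - d) $ e = 0 \<or> sgn ((l - d) $ e) = sgn (l $ e)"
      using int_flow_step[OF TU step(1)] by blast
    have "d \<in> Dset M \<epsilon>"
      unfolding Dset_def
    proof (intro CollectI conjI allI d(1))
      fix e show "d $ e = 0 \<or> d $ e = of_int (\<epsilon> e)"
        using d(2)[rule_format, of e] step(3) unfolding confv_def by (metis sgn_0)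
    qed
    hence "inner a d \<ge> 0" by (rule D)
    moreover have "confv \<epsilon> (l - d)"
      unfolding confv_def
    proof
      fix e show "(l - d) $ e = 0 \<or> sgn ((l - d) $ e) = of_int (\<epsilon> e)"
        using d(5)[rule_format, of e] step(3) unfolding confv_def by (metis sgn_0_0)
    qed
    hence "inner a (l - d) \<ge> 0" using step(2)[OF d(3,4)] by blast
    ultimately show ?thesis using inner_diff_right[of a l d] by simp
  qed
qed

lemma span_conf:
  fixes M :: "real^'e::finite^'r::finite"
  assumes TU: "totally_unimodular M"
  shows "M *v z = 0 \<Longrightarrow> confv \<epsilon> z \<Longrightarrow> z \<in> span (Dset M \<epsilon>)"
proof (induction "card (suppv z)" arbitrary: z rule: less_induct)
  case less
  show ?case
  proof (cases "z = 0")
    case True thus ?thesis by (simp add: span_zero)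
  next
    case False
    obtain d where df: "M *v d = 0" and d0: "d \<noteq> 0" and dc: "\<forall>e. d $ e = 0 \<or> d $ e = sgn (z $ e)"
      using conformal_circuit[OF TU less(2) False] by blast
    have dI: "d \<in> integer_flows M"
      unfolding integer_flows_def real_flows_def
    proof (intro CollectI conjI allI)
      show "M *v d = 0" using df by simp
      fix e
      show "d $ e \<in> \<int>" using dc[rule_format, of e] sgn_cases[of "z $ e"] by auto
    qed
    have dD: "d \<in> Dset M \<epsilon>"
      unfolding Dset_def
    proof (intro CollectI conjI allI dI)
      fix e
      show "d $ e = 0 \<or> d $ e = of_int (\<epsilon> e)"
        using dc[rule_format, of e] less(3) unfolding confv_def by (metis sgn_0)
    qed
    have finS: "finite (suppv d)" by simp
    obtain e1 where e1: "d $ e1 \<noteq> 0" using d0 by (metis cvec_eqI zero_index)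
    hence neS: "suppv d \<noteq> {}" by (auto simp: suppv_def)
    define t where "t = Min ((\<lambda>e. \<bar>z $ e\<bar>) ` suppv d)"
    have "t \<in> (\<lambda>e. \<bar>z $ e\<bar>) ` suppv d" unfolding t_def using finS neS by (intro Min_in) auto
    then obtain e2 where e2: "e2 \<in> suppv d" "t = \<bar>z $ e2\<bar>" by auto
    have tle: "\<And>e. e \<in> suppv d \<Longrightarrow> t \<le> \<bar>z $ e\<bar>" unfolding t_def using finS by auto
    define z' where "z' = z - t *\<^sub>R d"
    have z'f: "M *v z' = 0" using less(2) df by (simp add: z'_def matrix_vector_mult_diff_distrib matrix_vector_mult_scaleR)
    have z'e: "z' $ e = (if d $ e = 0 then z $ e else sgn (z $ e) * (\<bar>z $ e\<bar> - t))" for e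
    proof (cases "d $ e = 0")
      case True thus ?thesis by (simp add: z'_def)
    next
      case False
      hence "d $ e = sgn (z $ e)" using dc by auto
      moreover have "z $ e = sgn (z $ e) * \<bar>z $ e\<bar>" by (simp add: mult_sgn_abs)
      ultimately show ?thesis using False by (simp add: z'_def algebra_simps)
    qed
    have z'c: "confv \<epsilon> z'"
      unfolding confv_def
    proof
      fix e
      show "z' $ e = 0 \<or> sgn (z' $ e) = of_int (\<epsilon> e)"
      proof (cases "d $ e = 0")
        case True thus ?thesis using z'e[of e] less(3) by (simp add: confv_def)
      next
        case False
        hence ze: "z $ e \<noteq> 0" using dc by (metis sgn_0)
        have "t \<le> \<bar>z $ e\<bar>" using tle False by (simp add: suppv_def)
        hence "\<bar>z $ e\<bar> - t = 0 \<or> \<bar>z $ e\<bar> - t > 0" by auto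
        thus ?thesis
        proof
          assume "\<bar>z $ e\<bar> - t = 0" thus ?thesis using z'e[of e] False by simp
        next
          assume "\<bar>z $ e\<bar> - t > 0"
          hence "sgn (z' $ e) = sgn (z $ e)" using z'e[of e] False by (simp add: sgn_mult)
          thus ?thesis using less(3) ze unfolding confv_def by metis
        qed
      qed
    qed
    have "suppv z' \<subseteq> suppv z - {e2}"
    proof
      fix e assume "e \<in> suppv z'"
      hence ne: "z' $ e \<noteq> 0" by (simp add: suppv_def)
      have "z $ e \<noteq> 0"
      proof
        assume "z $ e = 0"
        hence "d $ e = 0" using dc by auto
        thus False using ne \<open>z $ e = 0\<close> z'e[of e] by simp
      qed
      moreover have "e \<noteq> e2"
      proof
        assume "e = e2"
        hence "z' $ e = 0" using e2 z'e[of e] by (simp add: suppv_def)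
        thus False using ne by simp
      qed
      ultimately show "e \<in> suppv z - {e2}" by (simp add: suppv_def)
    qed
    moreover have "e2 \<in> suppv z" using e2(1) dc by (auto simp: suppv_def)
    ultimately have "card (suppv z') < card (suppv z)"
      using card_mono[of "suppv z - {e2}" "suppv z'"] card_Diff1_less[of "suppv z" e2] by fastforce
    hence "z' \<in> span (Dset M \<epsilon>)" using less(1) z'f z'c by blast
    moreover have "z = z' + t *\<^sub>R d" by (simp add: z'_def)
    ultimately show ?thesis using dD by (metis span_add span_base span_scale)
  qed
qed




lemma intf_sum: "finite A \<Longrightarrow> (\<And>i. i \<in> A \<Longrightarrow> f i \<in> integer_flows M) \<Longrightarrow> sum f A \<in> integer_flows M"
  by (induction A rule: finite_induct) (auto intro: intf_add intf_0)

lemma inner_span_zero: "(\<And>v. v \<in> N \<Longrightarrow> inner a v = 0) \<Longrightarrow> y \<in> span N \<Longrightarrow> inner a y = 0"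
proof -
  assume h: "\<And>v. v \<in> N \<Longrightarrow> inner a v = 0" and y: "y \<in> span N"
  have "subspace {v. inner a v = 0}" by (auto simp: subspace_def inner_add_right)
  moreover have "N \<subseteq> {v. inner a v = 0}" using h by auto
  ultimately have "span N \<subseteq> {v. inner a v = 0}" by (rule span_minimal[rotated])
  thus ?thesis using y by auto
qed

lemma p_exists:
  fixes M :: "real^'e::finite^'r::finite"
  assumes TU: "totally_unimodular M" and x: "x \<in> voronoi_cell M 0"
  defines "N \<equiv> Nx M x"
  shows "\<exists>p. p \<in> integer_flows M \<and> p \<in> span N \<and>
     (\<forall>e\<in>Sof N. of_int (epsof N e) * p $ e \<ge> 1) \<and> (\<forall>e. e \<notin> Sof N \<longrightarrow> p $ e = 0)"
proof -
  define pk where "pk e = (if e \<in> Sof N then (SOME \<mu>. \<mu> \<in> N \<and> \<mu> $ e \<noteq> 0) else 0)" for e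
  have pkS: "pk e \<in> N \<and> pk e $ e \<noteq> 0" if "e \<in> Sof N" for e
  proof -
    have "\<exists>\<mu>. \<mu> \<in> N \<and> \<mu> $ e \<noteq> 0" using that by (auto simp: Sof_def)
    hence "(SOME \<mu>. \<mu> \<in> N \<and> \<mu> $ e \<noteq> 0) \<in> N \<and> (SOME \<mu>. \<mu> \<in> N \<and> \<mu> $ e \<noteq> 0) $ e \<noteq> 0"
      by (rule someI_ex)
    thus ?thesis using that unfolding pk_def by simp
  qed
  have pkN: "pk e \<in> N \<or> pk e = 0" for e using pkS by (auto simp: pk_def)
  define p where "p = (\<Sum>e\<in>UNIV. pk e)"
  have NI: "N \<subseteq> integer_flows M" by (auto simp: N_def Nx_def)
  have pkI: "pk i \<in> integer_flows M" for i
    using pkN[of i] NI intf_0 by auto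
  have pkSp: "pk i \<in> span N" for i
  proof (cases "pk i = 0")
    case True thus ?thesis by (simp add: span_zero)
  next
    case False thus ?thesis using pkN[of i] by (simp add: span_base)
  qed
  have "p \<in> integer_flows M" unfolding p_def
    using pkI by (intro intf_sum) auto
  moreover have "p \<in> span N" unfolding p_def
    using pkSp by (intro span_sum) auto
  moreover have "\<forall>e. e \<notin> Sof N \<longrightarrow> p $ e = 0"
  proof (intro allI impI)
    fix e assume e: "e \<notin> Sof N"
    have "pk f $ e = 0" for f using pkN[of f] e by (auto simp: Sof_def)
    thus "p $ e = 0" by (simp add: p_def sum_component)
  qed
  moreover have "\<forall>e\<in>Sof N. of_int (epsof N e) * p $ e \<ge> 1"
  proof
    fix e assume e: "e \<in> Sof N"
    have ev: "of_int (epsof N e) = pk e $ e"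
      using epsof_val[OF TU x _ _ ] pkS[OF e] by (auto simp: N_def)
    have eu: "pk e $ e \<in> {-1, 1}" using N_unit[OF TU x] pkS[OF e] by (auto simp: N_def)
    have tm: "of_int (epsof N e) * pk f $ e \<in> {0, 1}" for f
    proof (cases "pk f $ e = 0")
      case True thus ?thesis by simp
    next
      case False
      hence "pk f \<in> N" using pkN[of f] by auto
      hence "of_int (epsof N e) = pk f $ e" using epsof_val[OF TU x _ _ False] by (auto simp: N_def)
      thus ?thesis using ev eu by auto
    qed
    have "of_int (epsof N e) * p $ e = (\<Sum>f\<in>UNIV. of_int (epsof N e) * pk f $ e)"
      by (simp add: p_def sum_component sum_distrib_left)
    also have "\<dots> \<ge> of_int (epsof N e) * pk e $ e"
    proof (rule member_le_sum)
      fix f show "0 \<le> of_int (epsof N e) * pk f $ e" using tm[of f] by auto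
    qed auto
    finally show "of_int (epsof N e) * p $ e \<ge> 1" using ev eu by auto
  qed
  ultimately show ?thesis by blast
qed

lemma K1:
  fixes M :: "real^'e::finite^'r::finite"
  assumes TU: "totally_unimodular M" and x: "x \<in> voronoi_cell M 0"
  shows "Nx M x = Dset M (epsof (Nx M x))"
proof
  let ?N = "Nx M x" and ?\<epsilon> = "epsof (Nx M x)"
  show "?N \<subseteq> Dset M ?\<epsilon>"
  proof
    fix l assume l: "l \<in> ?N"
    have "l $ e = 0 \<or> l $ e = of_int (?\<epsilon> e)" for e
      using epsof_val[OF TU x order_refl l] by metis
    thus "l \<in> Dset M ?\<epsilon>" using l by (auto simp: Dset_def Nx_def)
  qed
  show "Dset M ?\<epsilon> \<subseteq> ?N"
  proof
    fix l assume l: "l \<in> Dset M ?\<epsilon>"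
    have xn: "\<And>y. y \<in> integer_flows M \<Longrightarrow> Gf x y \<ge> 0" using x voronoi_iff by blast
    define ev where "ev = (\<chi> e. (of_int (?\<epsilon> e) :: real))"
    define a where "a = ev - 2 *\<^sub>R x"
    have GD: "Gf x d = inner a d" if "d \<in> Dset M ?\<epsilon>" for d
    proof -
      have dd: "d $ e * d $ e = ev $ e * d $ e" for e
      proof -
        have "d $ e = 0 \<or> d $ e = of_int (?\<epsilon> e)" using that by (simp add: Dset_def)
        thus ?thesis by (auto simp: ev_def)
      qed
      have "inner d d = inner ev d" unfolding inner_vec_def by (rule sum.cong) (use dd in auto)
      thus ?thesis by (simp add: Gf_def a_def inner_diff_left)
    qed
    have Dnn: "inner a d \<ge> 0" if "d \<in> Dset M ?\<epsilon>" for d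
    proof -
      have "d \<in> integer_flows M" using that by (simp add: Dset_def)
      thus ?thesis using GD[OF that] xn[of d] by linarith
    qed
    obtain p where p: "p \<in> integer_flows M" "p \<in> span ?N"
      "\<forall>e\<in>Sof ?N. of_int (?\<epsilon> e) * p $ e \<ge> 1" "\<forall>e. e \<notin> Sof ?N \<longrightarrow> p $ e = 0"
      using p_exists[OF TU x] by blast
    have NinD: "?N \<subseteq> Dset M ?\<epsilon>" using \<open>?N \<subseteq> Dset M ?\<epsilon>\<close> .
    have ap: "inner a p = 0"
    proof (rule inner_span_zero[OF _ p(2)])
      fix v assume "v \<in> ?N"
      thus "inner a v = 0" using GD NinD by (auto simp: Nx_def)
    qed
    have li: "l \<in> integer_flows M" using l by (simp add: Dset_def)
    have "confv ?\<epsilon> (p - l)"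
      unfolding confv_def
    proof
      fix e
      show "(p - l) $ e = 0 \<or> sgn ((p - l) $ e) = of_int (?\<epsilon> e)"
      proof (cases "e \<in> Sof ?N")
        case False
        hence "?\<epsilon> e = 0" by (rule epsof_zero)
        hence "l $ e = 0" using l by (auto simp: Dset_def)
        thus ?thesis using p(4) False by simp
      next
        case True
        have pe: "of_int (?\<epsilon> e) * p $ e \<ge> 1" using p(3) True by blast
        have le: "l $ e = 0 \<or> l $ e = of_int (?\<epsilon> e)" using l by (auto simp: Dset_def)
        have er: "?\<epsilon> e \<in> {-1, 0, 1}" by (rule epsof_range)
        show ?thesis
        proof (cases "?\<epsilon> e = 1")
          case True
          thus ?thesis using pe le by (auto simp: sgn_if)
        next
          case False
          hence "?\<epsilon> e = -1 \<or> ?\<epsilon> e = 0" using er by auto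
          thus ?thesis using pe le by (auto simp: sgn_if)
        qed
      qed
    qed
    hence "inner a (p - l) \<ge> 0"
      using cone_nonneg[OF TU Dnn intf_diff[OF p(1) li]] by blast
    hence "inner a l \<le> 0" using ap by (simp add: inner_diff_right)
    moreover have "inner a l \<ge> 0" using Dnn[OF l] .
    ultimately have "Gf x l = 0" using GD[OF l] by simp
    thus "l \<in> ?N" using li by (simp add: Nx_def)
  qed
qed

definition Fsub :: "real^'e^'r \<Rightarrow> 'e set \<Rightarrow> (real^'e) set" where
  "Fsub M S = {y. M *v y = 0 \<and> (\<forall>e. e \<notin> S \<longrightarrow> y $ e = 0)}"

lemma subspace_Fsub: "subspace (Fsub M S)"
  by (auto simp: subspace_def Fsub_def matrix_vector_right_distrib matrix_vector_mult_scaleR)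

lemma span_N:
  fixes M :: "real^'e::finite^'r::finite"
  assumes TU: "totally_unimodular M" and x: "x \<in> voronoi_cell M 0"
  shows "span (Nx M x) = Fsub M (Sof (Nx M x))"
proof
  let ?N = "Nx M x" and ?\<epsilon> = "epsof (Nx M x)" and ?S = "Sof (Nx M x)"
  show "span ?N \<subseteq> Fsub M ?S"
  proof (rule span_minimal[OF _ subspace_Fsub])
    show "?N \<subseteq> Fsub M ?S"
    proof
      fix l assume l: "l \<in> ?N"
      have "M *v l = 0" using l by (simp add: Nx_def integer_flows_def real_flows_def)
      moreover have "\<forall>e. e \<notin> ?S \<longrightarrow> l $ e = 0" using l unfolding Sof_def by blast
      ultimately show "l \<in> Fsub M ?S" by (simp add: Fsub_def)
    qed
  qed
  show "Fsub M ?S \<subseteq> span ?N"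
  proof
    fix y assume y: "y \<in> Fsub M ?S"
    obtain p where p: "p \<in> integer_flows M" "p \<in> span ?N"
      "\<forall>e\<in>?S. of_int (?\<epsilon> e) * p $ e \<ge> 1" "\<forall>e. e \<notin> ?S \<longrightarrow> p $ e = 0"
      using p_exists[OF TU x] by blast
    define t where "t = l1 y + 1"
    have ty: "\<bar>y $ e\<bar> < t" for e
    proof -
      have "\<bar>y $ e\<bar> \<le> l1 y" unfolding l1_def by (rule member_le_sum) auto
      thus ?thesis by (simp add: t_def)
    qed
    define z where "z = y + t *\<^sub>R p"
    have zf: "M *v z = 0" using y p(1)
      by (simp add: z_def Fsub_def integer_flows_def real_flows_def matrix_vector_right_distrib matrix_vector_mult_scaleR)
    have "confv ?\<epsilon> z"
      unfolding confv_def
    proof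
      fix e
      show "z $ e = 0 \<or> sgn (z $ e) = of_int (?\<epsilon> e)"
      proof (cases "e \<in> ?S")
        case False thus ?thesis using y p(4) by (simp add: z_def Fsub_def)
      next
        case True
        have pe: "of_int (?\<epsilon> e) * p $ e \<ge> 1" using p(3) True by blast
        have er: "?\<epsilon> e \<in> {-1, 0, 1}" by (rule epsof_range)
        have t0: "t > 0" using ty[of e] by linarith
        have "of_int (?\<epsilon> e) * z $ e = of_int (?\<epsilon> e) * y $ e + t * (of_int (?\<epsilon> e) * p $ e)"
          by (simp add: z_def algebra_simps)
        also have "\<dots> \<ge> of_int (?\<epsilon> e) * y $ e + t"
          using pe t0 by (simp add: mult_le_cancel_left1)
        finally have "of_int (?\<epsilon> e) * z $ e > 0"
          using ty[of e] er by (auto simp: abs_if split: if_splits)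
        thus ?thesis using er by (auto simp: sgn_if zero_less_mult_iff)
      qed
    qed
    hence "z \<in> span (Dset M ?\<epsilon>)" using span_conf[OF TU zf] by blast
    hence "z \<in> span ?N" using K1[OF TU x] by simp
    moreover have "y = z - t *\<^sub>R p" by (simp add: z_def)
    ultimately show "y \<in> span ?N" using p(2) by (metis span_diff span_scale)
  qed
qed




lemma subspace_flows: "subspace (real_flows (M::real^'n^'m))"
  by (auto simp: subspace_def real_flows_def matrix_vector_right_distrib matrix_vector_mult_scaleR)

lemma term_int:
  fixes l c :: real
  assumes l: "l \<in> \<int>" and c: "c \<in> {-1, 0, 1}"
  shows "l * l - c * l \<ge> 0 \<and> (l * l - c * l = 0 \<longleftrightarrow> l = 0 \<or> l = c)"
proof (cases "l = 0")
  case True thus ?thesis by simp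
next
  case False
  obtain n where n: "l = of_int n" using l by (metis Ints_cases)
  have g1: "\<bar>l\<bar> \<ge> 1" using False n by simp
  have "l * l = \<bar>l\<bar> * \<bar>l\<bar>" by (simp add: abs_mult_self_eq)
  also have "\<dots> \<ge> \<bar>l\<bar> * 1" using g1 by (intro mult_left_mono) auto
  finally have a: "l * l \<ge> \<bar>l\<bar>" by simp
  have b: "c * l \<le> \<bar>l\<bar>" using c by auto
  have "l * l - c * l = 0 \<longleftrightarrow> l = c"
  proof
    assume "l * l - c * l = 0"
    hence "(l - c) * l = 0" by (simp add: algebra_simps)
    thus "l = c" using False by simp
  qed simp
  thus ?thesis using a b False by simp
qed

lemma sc_point:
  fixes M :: "real^'e::finite^'r::finite"
  assumes TU: "totally_unimodular M" and sc: "(S, \<epsilon>) \<in> SC M"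
  shows "\<exists>x0 \<in> voronoi_cell M 0. Nx M x0 = Dset M \<epsilon> \<and> Sof (Dset M \<epsilon>) = S \<and> epsof (Dset M \<epsilon>) = \<epsilon>"
proof -
  have os: "\<forall>e\<in>S. \<epsilon> e \<in> {-1, 1}" "\<forall>e. e \<notin> S \<longrightarrow> \<epsilon> e = 0"
    using sc by (auto simp: SC_def oriented_submatroid_def)
  have er: "\<epsilon> e \<in> {-1, 0, 1}" for e using os by (cases "e \<in> S") auto
  have scon: "\<forall>e\<in>S. \<exists>w :: 'e \<Rightarrow> int. (\<forall>f\<in>S. w f \<ge> 0) \<and> w e \<ge> 1 \<and>
        (\<Sum>f\<in>S. (of_int (w f * \<epsilon> f)) *\<^sub>R column f M) = 0"
    using sc by (auto simp: SC_def strongly_connected_def)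
  define u where "u = (\<chi> e. (of_int (\<epsilon> e) :: real) / 2)"
  obtain x0 z where x0: "x0 \<in> span (real_flows M)" and zo: "\<And>w. w \<in> span (real_flows M) \<Longrightarrow> real_inner_class.orthogonal z w"
    and uxz: "u = x0 + z"
    using orthogonal_subspace_decomp_exists[of "real_flows M" u] by blast
  have spF: "span (real_flows M) = real_flows M" using subspace_flows span_eq_iff by blast
  have x0f: "x0 \<in> real_flows M" using x0 spF by simp
  have Gx0: "Gf x0 l = (\<Sum>e\<in>UNIV. l $ e * l $ e - of_int (\<epsilon> e) * l $ e)" if "l \<in> real_flows M" for l
  proof -
    have "inner z l = 0" using zo[of l] that spF by (simp add: real_inner_class.orthogonal_def)
    hence "inner x0 l = inner u l" using uxz by (simp add: inner_add_left)
    thus ?thesis by (simp add: Gf_def inner_vec_def u_def sum_subtractf sum_distrib_left algebra_simps)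
  qed
  have tI: "\<And>l e. l \<in> integer_flows M \<Longrightarrow> l $ e * l $ e - of_int (\<epsilon> e) * l $ e \<ge> 0 \<and>
      (l $ e * l $ e - of_int (\<epsilon> e) * l $ e = 0 \<longleftrightarrow> l $ e = 0 \<or> l $ e = of_int (\<epsilon> e))"
  proof -
    fix l e assume "l \<in> integer_flows M"
    hence "l $ e \<in> \<int>" by (simp add: integer_flows_def)
    moreover have "(of_int (\<epsilon> e) :: real) \<in> {-1, 0, 1}" using er[of e] by auto
    ultimately show "?thesis l e" by (rule term_int)
  qed
  have Gnn: "Gf x0 l \<ge> 0" if "l \<in> integer_flows M" for l
    using that tI[OF that] Gx0[of l] by (auto simp: integer_flows_def intro: sum_nonneg)
  have x0V: "x0 \<in> voronoi_cell M 0" using x0f Gnn voronoi_iff by blast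
  have NxD: "Nx M x0 = Dset M \<epsilon>"
  proof -
    have "Gf x0 l = 0 \<longleftrightarrow> (\<forall>e. l $ e = 0 \<or> l $ e = of_int (\<epsilon> e))" if l: "l \<in> integer_flows M" for l
    proof -
      have "Gf x0 l = 0 \<longleftrightarrow> (\<forall>e\<in>UNIV. l $ e * l $ e - of_int (\<epsilon> e) * l $ e = 0)"
        using Gx0[of l] l tI[OF l] by (subst sum_nonneg_eq_0_iff[symmetric]) (auto simp: integer_flows_def)
      thus ?thesis using tI[OF l] by auto
    qed
    thus ?thesis by (auto simp: Nx_def Dset_def)
  qed
  have SD: "Sof (Dset M \<epsilon>) = S"
  proof
    show "Sof (Dset M \<epsilon>) \<subseteq> S"
    proof
      fix e assume "e \<in> Sof (Dset M \<epsilon>)"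
      then obtain l where "l \<in> Dset M \<epsilon>" "l $ e \<noteq> 0" by (auto simp: Sof_def)
      hence "\<epsilon> e \<noteq> 0" by (auto simp: Dset_def)
      thus "e \<in> S" using os by auto
    qed
    show "S \<subseteq> Sof (Dset M \<epsilon>)"
    proof
      fix e assume eS: "e \<in> S"
      obtain w :: "'e \<Rightarrow> int" where w: "\<forall>f\<in>S. w f \<ge> 0" "w e \<ge> 1"
        "(\<Sum>f\<in>S. (of_int (w f * \<epsilon> f)) *\<^sub>R column f M) = 0"
        using scon eS by blast
      define y where "y = (\<chi> f. if f \<in> S then (of_int (w f * \<epsilon> f) :: real) else 0)"
      have yf: "M *v y = 0"
      proof -
        have "M *v y = (\<Sum>f\<in>UNIV. (y $ f) *\<^sub>R column f M)"
          by (simp add: matrix_mult_sum scalar_mult_eq_scaleR)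
        also have "\<dots> = (\<Sum>f\<in>S. (of_int (w f * \<epsilon> f)) *\<^sub>R column f M)"
          by (rule sum.mono_neutral_cong_right) (auto simp: y_def)
        finally show ?thesis using w(3) by simp
      qed
      have yc: "confv \<epsilon> y"
        unfolding confv_def
      proof
        fix f
        show "y $ f = 0 \<or> sgn (y $ f) = of_int (\<epsilon> f)"
        proof (cases "f \<in> S \<and> w f \<noteq> 0")
          case True
          hence "w f > 0" "\<epsilon> f \<in> {-1, 1}" using w(1) os(1) by force+
          thus ?thesis using True by (auto simp: y_def sgn_mult)
        next
          case False thus ?thesis by (auto simp: y_def)
        qed
      qed
      have ye: "y $ e \<noteq> 0" using eS w(2) os(1) by (auto simp: y_def)
      have "y \<in> span (Dset M \<epsilon>)" using span_conf[OF TU yf yc] .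
      show "e \<in> Sof (Dset M \<epsilon>)"
      proof (rule ccontr)
        assume "e \<notin> Sof (Dset M \<epsilon>)"
        hence "Dset M \<epsilon> \<subseteq> {v. v $ e = 0}" by (auto simp: Sof_def)
        moreover have "subspace {v::real^'e. v $ e = 0}" by (auto simp: subspace_def)
        ultimately have "span (Dset M \<epsilon>) \<subseteq> {v. v $ e = 0}" by (rule span_minimal)
        thus False using \<open>y \<in> span (Dset M \<epsilon>)\<close> ye by auto
      qed
    qed
  qed
  have ED: "epsof (Dset M \<epsilon>) = \<epsilon>"
  proof
    fix e
    show "epsof (Dset M \<epsilon>) e = \<epsilon> e"
    proof (cases "e \<in> S")
      case False
      hence "\<epsilon> e = 0" using os by auto
      moreover have "e \<notin> Sof (Dset M \<epsilon>)" using SD False by simp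
      ultimately show ?thesis by (simp add: epsof_zero)
    next
      case True
      then obtain l where l: "l \<in> Dset M \<epsilon>" "l $ e \<noteq> 0" using SD by (auto simp: Sof_def)
      hence le: "l $ e = of_int (\<epsilon> e)" by (auto simp: Dset_def)
      have all: "\<And>m. m \<in> Dset M \<epsilon> \<Longrightarrow> m $ e = 0 \<or> m $ e = of_int (\<epsilon> e)" by (auto simp: Dset_def)
      have "\<epsilon> e = 1 \<or> \<epsilon> e = -1" using os True by auto
      thus ?thesis
      proof
        assume "\<epsilon> e = 1" thus ?thesis using l le by (auto simp: epsof_def)
      next
        assume m1: "\<epsilon> e = -1"
        hence "\<not> (\<exists>m\<in>Dset M \<epsilon>. m $ e = 1)" using all by force
        thus ?thesis using l le m1 by (auto simp: epsof_def)
      qed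
    qed
  qed
  show ?thesis using x0V NxD SD ED by blast
qed




lemma Gf_comb: "a + b = 1 \<Longrightarrow> Gf (a *\<^sub>R y + b *\<^sub>R x) l = a * Gf y l + b * Gf x l"
  by (simp add: Gf_def inner_add_left algebra_simps) (metis distrib_right mult_1 mult.commute)

lemma V_convex: "convex (voronoi_cell M 0)"
  unfolding convex_def
proof (intro ballI allI impI)
  fix x y and u v :: real
  assume x: "x \<in> voronoi_cell M 0" and y: "y \<in> voronoi_cell M 0" and uv: "0 \<le> u" "0 \<le> v" "u + v = 1"
  have xf: "x \<in> real_flows M" and yf: "y \<in> real_flows M" using x y voronoi_iff by blast+
  have "u *\<^sub>R x + v *\<^sub>R y \<in> real_flows M" using xf yf
    by (simp add: real_flows_def matrix_vector_right_distrib matrix_vector_mult_scaleR)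
  moreover have "Gf (u *\<^sub>R x + v *\<^sub>R y) l \<ge> 0" if "l \<in> integer_flows M" for l
  proof -
    have "Gf (u *\<^sub>R x + v *\<^sub>R y) l = u * Gf x l + v * Gf y l" using Gf_comb[OF uv(3)] .
    moreover have "Gf x l \<ge> 0" "Gf y l \<ge> 0" using x y that voronoi_iff by blast+
    ultimately show ?thesis using uv by simp
  qed
  ultimately show "u *\<^sub>R x + v *\<^sub>R y \<in> voronoi_cell M 0" using voronoi_iff by blast
qed

definition NF :: "real^'e^'r \<Rightarrow> (real^'e) set \<Rightarrow> (real^'e) set" where
  "NF M F = {l \<in> integer_flows M. \<forall>x\<in>F. Gf x l = 0}"

definition Fc :: "real^'e^'r \<Rightarrow> (real^'e) set \<Rightarrow> (real^'e) set" where
  "Fc M N = {y \<in> voronoi_cell M 0. N \<subseteq> Nx M y}"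

lemma NF_relint:
  fixes M :: "real^'e::finite^'r::finite"
  assumes F: "F face_of voronoi_cell M 0" and x: "x \<in> rel_interior F"
  shows "NF M F = Nx M x"
proof
  have xF: "x \<in> F" using x rel_interior_subset by blast
  show "NF M F \<subseteq> Nx M x" using xF by (auto simp: NF_def Nx_def)
  show "Nx M x \<subseteq> NF M F"
  proof
    fix l assume l: "l \<in> Nx M x"
    have li: "l \<in> integer_flows M" and l0: "Gf x l = 0" using l by (auto simp: Nx_def)
    have cF: "convex F" using F face_of_imp_convex by blast
    have FV: "F \<subseteq> voronoi_cell M 0" using F face_of_imp_subset by blast
    have "Gf y l = 0" if y: "y \<in> F" for y
    proof -
      obtain e where e: "e > 1" "(1 - e) *\<^sub>R y + e *\<^sub>R x \<in> F"
        using convex_rel_interior_iff[OF cF] x y by blast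
      have "Gf ((1 - e) *\<^sub>R y + e *\<^sub>R x) l \<ge> 0" using e(2) FV li voronoi_iff by blast
      moreover have "Gf ((1 - e) *\<^sub>R y + e *\<^sub>R x) l = (1 - e) * Gf y l + e * Gf x l"
        by (rule Gf_comb) simp
      moreover have "Gf y l \<ge> 0" using y FV li voronoi_iff by blast
      ultimately show ?thesis using l0 e(1) by (simp add: mult_le_0_iff) (smt (verit) mult_neg_pos)
    qed
    thus "l \<in> NF M F" using li by (simp add: NF_def)
  qed
qed

lemma finite_Rset: "finite (Rset (M::real^'e::finite^'r::finite))"
proof -
  have "Rset M \<subseteq> vec_lambda ` (PiE UNIV (\<lambda>_. {-1, 0, 1::real}))"
  proof
    fix v assume "v \<in> Rset M"
    hence "vec_nth v \<in> PiE UNIV (\<lambda>_. {-1, 0, 1::real})" by (auto simp: Rset_def PiE_iff)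
    thus "v \<in> vec_lambda ` (PiE UNIV (\<lambda>_. {-1, 0, 1::real}))" by (metis image_eqI vec_nth_inverse)
  qed
  moreover have "finite (PiE (UNIV::'e set) (\<lambda>_. {-1, 0, 1::real}))" by (intro finite_PiE) auto
  ultimately show ?thesis using finite_subset by blast
qed

lemma Nx_Rset:
  fixes M :: "real^'e::finite^'r::finite"
  assumes TU: "totally_unimodular M" and x: "x \<in> voronoi_cell M 0"
  shows "Nx M x \<subseteq> Rset M"
  using N_unit[OF TU x] by (auto simp: Rset_def Nx_def)

lemma face_eq_Fc:
  fixes M :: "real^'e::finite^'r::finite"
  assumes TU: "totally_unimodular M" and F: "F face_of voronoi_cell M 0" and x: "x \<in> rel_interior F"
  shows "F = Fc M (NF M F)"
proof
  have FV: "F \<subseteq> voronoi_cell M 0" using F face_of_imp_subset by blast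
  show "F \<subseteq> Fc M (NF M F)" using FV by (auto simp: Fc_def NF_def Nx_def)
  show "Fc M (NF M F) \<subseteq> F"
  proof
    fix y assume y: "y \<in> Fc M (NF M F)"
    have yV: "y \<in> voronoi_cell M 0" and NN: "Nx M x \<subseteq> Nx M y"
      using y NF_relint[OF F x] by (auto simp: Fc_def)
    have xF: "x \<in> F" using x rel_interior_subset by blast
    have xV: "x \<in> voronoi_cell M 0" using xF FV by blast
    show "y \<in> F"
    proof (cases "y = x")
      case True thus ?thesis using xF by simp
    next
      case False
      have ev: "\<forall>d\<in>Rset M. eventually (\<lambda>t. (1 + t) * Gf x d - t * Gf y d \<ge> 0) (at_right 0)"
      proof
        fix d assume d: "d \<in> Rset M"
        show "eventually (\<lambda>t. (1 + t) * Gf x d - t * Gf y d \<ge> 0) (at_right (0::real))"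
        proof (cases "d \<in> Nx M x")
          case True
          hence "Gf x d = 0" "Gf y d = 0" using NN by (auto simp: Nx_def)
          thus ?thesis by simp
        next
          case False
          have "Gf x d \<ge> 0" using xV d voronoi_iff by (auto simp: Rset_def)
          hence pos: "Gf x d > 0" using False d by (auto simp: Nx_def Rset_def)
          have "((\<lambda>t. (1 + t) * Gf x d - t * Gf y d) \<longlongrightarrow> (1 + 0) * Gf x d - 0 * Gf y d) (at_right (0::real))"
            by (intro tendsto_intros)
          hence "((\<lambda>t. (1 + t) * Gf x d - t * Gf y d) \<longlongrightarrow> Gf x d) (at_right (0::real))" by simp
          from order_tendstoD(1)[OF this pos] show ?thesis by (rule eventually_mono) simp
        qed
      qed
      have "eventually (\<lambda>t. \<forall>d\<in>Rset M. (1 + t) * Gf x d - t * Gf y d \<ge> 0) (at_right (0::real))"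
        using eventually_ball_finite[OF finite_Rset ev] .
      then obtain b where b: "b > 0" "\<And>t. t > 0 \<Longrightarrow> t < b \<Longrightarrow> \<forall>d\<in>Rset M. (1 + t) * Gf x d - t * Gf y d \<ge> 0"
        unfolding eventually_at_right_field by auto
      define t where "t = b / 2"
      have t: "t > 0" "t < b" using b by (auto simp: t_def)
      define z where "z = x + t *\<^sub>R (x - y)"
      have xf: "x \<in> real_flows M" and yf: "y \<in> real_flows M" using xV yV voronoi_iff by blast+
      have zf: "z \<in> real_flows M" unfolding z_def using xf yf
        by (simp add: real_flows_def matrix_vector_right_distrib matrix_vector_mult_scaleR matrix_vector_mult_diff_distrib)
      have zV: "z \<in> voronoi_cell M 0"
      proof (rule voronoi_via_R[OF TU zf])
        fix d assume "d \<in> Rset M"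
        thus "Gf z d \<ge> 0" using b(2)[OF t] unfolding z_def Gf_affine by blast
      qed
      have "x \<in> open_segment z y"
        unfolding in_segment
      proof
        show "z \<noteq> y"
        proof
          assume "z = y"
          hence "(1 + t) *\<^sub>R (x - y) = 0" by (simp add: z_def algebra_simps)
          thus False using t False by simp
        qed
        show "\<exists>u>0. u < 1 \<and> x = (1 - u) *\<^sub>R z + u *\<^sub>R y"
        proof (intro exI conjI)
          show "t / (1 + t) > 0" "t / (1 + t) < 1" using t by auto
          have "(1 - t / (1 + t)) *\<^sub>R z + (t / (1 + t)) *\<^sub>R y
              = (1 / (1 + t)) *\<^sub>R ((1 + t) *\<^sub>R x)"
            using t by (simp add: z_def field_simps scaleR_add_right scaleR_diff_right algebra_simps)
          thus "x = (1 - t / (1 + t)) *\<^sub>R z + (t / (1 + t)) *\<^sub>R y" using t by simp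
        qed
      qed
      thus "y \<in> F" using F zV yV xF unfolding face_of_def by blast
    qed
  qed
qed




lemma Gf_plus: "Gf (x + v) d = Gf x d - 2 * inner v d"
  by (simp add: Gf_def inner_add_left algebra_simps)

lemma face_dim:
  fixes M :: "real^'e::finite^'r::finite"
  assumes TU: "totally_unimodular M" and F: "F face_of voronoi_cell M 0" and x: "x \<in> rel_interior F"
  shows "aff_dim F = int (genus M) - int (dim (Fsub M (Sof (Nx M x))))"
proof -
  define N where "N = Nx M x"
  define W where "W = {v \<in> real_flows M. \<forall>l\<in>N. inner v l = 0}"
  have FV: "F \<subseteq> voronoi_cell M 0" using F face_of_imp_subset by blast
  have xF: "x \<in> F" using x rel_interior_subset by blast
  have xV: "x \<in> voronoi_cell M 0" using xF FV by blast
  have xf: "x \<in> real_flows M" using xV voronoi_iff by blast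
  have NF: "NF M F = N" using NF_relint[OF F x] by (simp add: N_def)
  have subW: "subspace W"
    by (auto simp: subspace_def W_def real_flows_def matrix_vector_right_distrib matrix_vector_mult_scaleR inner_add_left)
  have FW: "F \<subseteq> (+) x ` W"
  proof
    fix y assume y: "y \<in> F"
    have yf: "y \<in> real_flows M" using y FV voronoi_iff by blast
    have "y - x \<in> W"
    proof -
      have "y - x \<in> real_flows M" using xf yf by (simp add: real_flows_def matrix_vector_mult_diff_distrib)
      moreover have "inner (y - x) l = 0" if "l \<in> N" for l
      proof -
        have "Gf y l = 0" "Gf x l = 0" using that y xF NF by (auto simp: NF_def)
        thus ?thesis using Gf_plus[of x "y - x" l] by simp
      qed
      ultimately show ?thesis by (simp add: W_def)
    qed
    thus "y \<in> (+) x ` W" by (metis add.commute diff_add_cancel image_eqI)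
  qed
  have ev: "\<forall>d\<in>Rset M - N. eventually (\<lambda>y. Gf y d > 0) (at x)"
  proof
    fix d assume d: "d \<in> Rset M - N"
    have "Gf x d \<ge> 0" using xV d voronoi_iff by (auto simp: Rset_def)
    hence pos: "Gf x d > 0" using d by (auto simp: N_def Nx_def Rset_def)
    have "((\<lambda>y. inner d d - 2 * inner y d) \<longlongrightarrow> inner d d - 2 * inner x d) (at x)"
      by (intro tendsto_intros)
    hence "((\<lambda>y. Gf y d) \<longlongrightarrow> Gf x d) (at x)" by (simp add: Gf_def)
    from order_tendstoD(1)[OF this pos] show "eventually (\<lambda>y. Gf y d > 0) (at x)" .
  qed
  have "eventually (\<lambda>y. \<forall>d\<in>Rset M - N. Gf y d > 0) (at x)"
    using eventually_ball_finite[OF _ ev] finite_Rset by blast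
  then obtain r where r: "r > 0" "\<And>y. y \<noteq> x \<Longrightarrow> dist y x < r \<Longrightarrow> \<forall>d\<in>Rset M - N. Gf y d > 0"
    unfolding eventually_at by auto
  have ballF: "(+) x ` W \<inter> ball x r \<subseteq> F"
  proof
    fix y assume y: "y \<in> (+) x ` W \<inter> ball x r"
    then obtain v where v: "v \<in> W" "y = x + v" by auto
    show "y \<in> F"
    proof (cases "y = x")
      case True thus ?thesis using xF by simp
    next
      case False
      have dyx: "dist y x < r" using y by (simp add: dist_commute)
      have yf: "y \<in> real_flows M" using xf v
        by (simp add: W_def real_flows_def matrix_vector_right_distrib)
      have GN: "Gf y l = 0" if "l \<in> N" for l
      proof -
        have "Gf x l = 0" using that by (simp add: N_def Nx_def)
        moreover have "inner v l = 0" using v(1) that by (simp add: W_def)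
        ultimately show ?thesis using v(2) Gf_plus[of x v l] by simp
      qed
      have yV: "y \<in> voronoi_cell M 0"
      proof (rule voronoi_via_R[OF TU yf])
        fix d assume d: "d \<in> Rset M"
        show "Gf y d \<ge> 0"
        proof (cases "d \<in> N")
          case True thus ?thesis using GN by simp
        next
          case False
          hence "d \<in> Rset M - N" using d by blast
          hence "0 < Gf y d" using r(2)[OF \<open>y \<noteq> x\<close> dyx] by blast
          thus ?thesis by simp
        qed
      qed
      have "N \<subseteq> Nx M y" using GN by (auto simp: N_def Nx_def)
      hence "y \<in> Fc M (NF M F)" using yV NF by (simp add: Fc_def)
      thus ?thesis using face_eq_Fc[OF TU F x] by simp
    qed
  qed
  have cA: "convex ((+) x ` W)" using subW by (intro convex_translation subspace_imp_convex)
  have ne: "(+) x ` W \<inter> ball x r \<noteq> {}"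
  proof -
    have "x \<in> (+) x ` W" using subW by (metis add_0_right image_eqI subspace_0)
    thus ?thesis using r(1) by auto
  qed
  have "aff_dim ((+) x ` W \<inter> ball x r) = aff_dim ((+) x ` W)"
    by (rule aff_dim_convex_Int_open[OF cA open_ball ne])
  moreover have "aff_dim ((+) x ` W \<inter> ball x r) \<le> aff_dim F" using ballF by (rule aff_dim_subset)
  moreover have "aff_dim F \<le> aff_dim ((+) x ` W)" using FW by (rule aff_dim_subset)
  ultimately have adF: "aff_dim F = int (dim W)"
    using aff_dim_translation_eq[of x W] aff_dim_subspace[OF subW] by simp
  have spanN: "span N = Fsub M (Sof N)" using span_N[OF TU xV] by (simp add: N_def)
  have subN: "span N \<subseteq> real_flows M"
    using spanN by (auto simp: Fsub_def real_flows_def)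
  have Weq: "{y \<in> real_flows M. \<forall>a\<in>span N. real_inner_class.orthogonal a y} = W"
  proof
    show "{y \<in> real_flows M. \<forall>a\<in>span N. real_inner_class.orthogonal a y} \<subseteq> W"
      by (auto simp: W_def real_inner_class.orthogonal_def inner_commute intro: span_base)
    show "W \<subseteq> {y \<in> real_flows M. \<forall>a\<in>span N. real_inner_class.orthogonal a y}"
    proof
      fix y assume y: "y \<in> W"
      have "inner y a = 0" if "a \<in> span N" for a
        using inner_span_zero[of N y a] y that by (auto simp: W_def)
      thus "y \<in> {y \<in> real_flows M. \<forall>a\<in>span N. real_inner_class.orthogonal a y}"
        using y by (auto simp: W_def real_inner_class.orthogonal_def inner_commute)
    qed
  qed
  have "dim W + dim (span N) = dim (real_flows M)"
    using dim_subspace_orthogonal_to_vectors[OF subspace_span subspace_flows subN] Weq by simp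
  hence "dim W + dim (Fsub M (Sof N)) = genus M" using spanN by (simp add: genus_def)
  thus ?thesis using adF by (simp add: N_def)
qed




definition phiF :: "real^'e^'r \<Rightarrow> (real^'e) set \<Rightarrow> 'e set \<times> ('e \<Rightarrow> int)" where
  "phiF M F = (Sof (NF M F), epsof (NF M F))"

definition rx :: "(real^'e) set \<Rightarrow> real^'e" where
  "rx F = (SOME x. x \<in> rel_interior F)"

lemma rx_facts:
  fixes M :: "real^'e::finite^'r::finite"
  assumes F: "F \<in> face_poset M"
  shows "rx F \<in> rel_interior F" "F face_of voronoi_cell M 0" "rx F \<in> voronoi_cell M 0"
    "NF M F = Nx M (rx F)"
proof -
  show Ff: "F face_of voronoi_cell M 0" using F by (simp add: face_poset_def)
  have "F \<noteq> {}" using F by (simp add: face_poset_def)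
  hence "rel_interior F \<noteq> {}" using rel_interior_eq_empty face_of_imp_convex[OF Ff] by blast
  thus ri: "rx F \<in> rel_interior F" unfolding rx_def by (metis ex_in_conv someI_ex)
  show "rx F \<in> voronoi_cell M 0"
    using ri rel_interior_subset face_of_imp_subset[OF Ff] by blast
  show "NF M F = Nx M (rx F)" by (rule NF_relint[OF Ff ri])
qed

lemma phi_in_SC:
  fixes M :: "real^'e::finite^'r::finite"
  assumes TU: "totally_unimodular M" and F: "F \<in> face_poset M"
  shows "phiF M F \<in> SC M"
proof -
  define x where "x = rx F"
  define N where "N = NF M F"
  have xV: "x \<in> voronoi_cell M 0" and NN: "N = Nx M x" using rx_facts[OF F] by (auto simp: x_def N_def)
  have NS: "N \<subseteq> Nx M x" using NN by simp
  have ev: "of_int (epsof N e) = l $ e" if "l \<in> N" "l $ e \<noteq> 0" for l e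
    using epsof_val[OF TU xV NS that] .
  have os: "oriented_submatroid (Sof N, epsof N)"
    unfolding oriented_submatroid_def
  proof (simp, intro conjI ballI allI impI)
    fix e assume "e \<in> Sof N"
    then obtain l where l: "l \<in> N" "l $ e \<noteq> 0" by (auto simp: Sof_def)
    have "l $ e \<in> {-1, 0, 1}" using N_unit[OF TU xV] l NN by blast
    hence "(of_int (epsof N e) :: real) \<in> {-1, 1}" using ev[OF l] l by auto
    thus "epsof N e = -1 \<or> epsof N e = 1" by auto
  next
    fix e assume "e \<notin> Sof N" thus "epsof N e = 0" by (rule epsof_zero)
  qed
  have scn: "strongly_connected M (Sof N, epsof N)"
    unfolding strongly_connected_def fst_conv snd_conv
  proof
    fix e assume "e \<in> Sof N"
    then obtain l where l: "l \<in> N" "l $ e \<noteq> 0" by (auto simp: Sof_def)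
    define w where "w f = (if l $ f = 0 then 0 else (1::int))" for f
    have lf: "M *v l = 0" using l NN by (simp add: Nx_def integer_flows_def real_flows_def)
    have "(\<Sum>f\<in>Sof N. (of_int (w f * epsof N f)) *\<^sub>R column f M) = (\<Sum>f\<in>UNIV. (l $ f) *\<^sub>R column f M)"
    proof (rule sum.mono_neutral_cong_left)
      show "\<forall>f\<in>UNIV - Sof N. l $ f *\<^sub>R column f M = 0" using l by (auto simp: Sof_def)
      fix f assume "f \<in> Sof N"
      show "(of_int (w f * epsof N f)) *\<^sub>R column f M = l $ f *\<^sub>R column f M"
      proof (cases "l $ f = 0")
        case True thus ?thesis by (simp add: w_def)
      next
        case False thus ?thesis using ev[OF l(1) False] by (simp add: w_def)
      qed
    qed auto
    also have "\<dots> = M *v l" by (simp add: matrix_mult_sum scalar_mult_eq_scaleR)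
    finally have "(\<Sum>f\<in>Sof N. (of_int (w f * epsof N f)) *\<^sub>R column f M) = 0" using lf by simp
    moreover have "\<forall>f\<in>Sof N. w f \<ge> 0" "w e \<ge> 1" using l by (auto simp: w_def)
    ultimately show "\<exists>w :: 'e \<Rightarrow> int. (\<forall>f\<in>Sof N. w f \<ge> 0) \<and> w e \<ge> 1 \<and>
        (\<Sum>f\<in>Sof N. (of_int (w f * epsof N f)) *\<^sub>R column f M) = 0" by blast
  qed
  show ?thesis using os scn by (simp add: SC_def phiF_def N_def)
qed

lemma Sof_mono: "A \<subseteq> B \<Longrightarrow> Sof A \<subseteq> Sof B" by (auto simp: Sof_def)

lemma Fc_anti: "A \<subseteq> B \<Longrightarrow> Fc M B \<subseteq> Fc M A" by (auto simp: Fc_def)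

lemma phi_order:
  fixes M :: "real^'e::finite^'r::finite"
  assumes TU: "totally_unimodular M" and F: "F \<in> face_poset M" and G: "G \<in> face_poset M"
  shows "F \<subseteq> G \<longleftrightarrow> sc_le (phiF M F) (phiF M G)"
proof
  have xV: "rx F \<in> voronoi_cell M 0" and NNF: "NF M F = Nx M (rx F)" using rx_facts[OF F] by auto
  have yV: "rx G \<in> voronoi_cell M 0" and NNG: "NF M G = Nx M (rx G)" using rx_facts[OF G] by auto
  {
    assume FG: "F \<subseteq> G"
    have sub: "NF M G \<subseteq> NF M F" using FG by (auto simp: NF_def)
    have "Sof (NF M G) \<subseteq> Sof (NF M F)" using sub by (rule Sof_mono)
    moreover have "epsof (NF M G) e = epsof (NF M F) e" if eS: "e \<in> Sof (NF M G)" for e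
    proof -
      obtain l where l: "l \<in> NF M G" "l $ e \<noteq> 0" using eS by (auto simp: Sof_def)
      have "of_int (epsof (NF M G) e) = l $ e"
        using epsof_val[OF TU xV _ l] sub NNF by blast
      moreover have "of_int (epsof (NF M F) e) = l $ e"
        using epsof_val[OF TU xV _ _ l(2)] sub NNF l(1) by blast
      ultimately show ?thesis by simp
    qed
    ultimately show "sc_le (phiF M F) (phiF M G)" by (simp add: sc_le_def phiF_def)
  }
  assume le: "sc_le (phiF M F) (phiF M G)"
  have SS: "Sof (NF M G) \<subseteq> Sof (NF M F)" and EE: "\<forall>e\<in>Sof (NF M G). epsof (NF M G) e = epsof (NF M F) e"
    using le by (auto simp: sc_le_def phiF_def)
  have sub: "NF M G \<subseteq> NF M F"
  proof
    fix l assume l: "l \<in> NF M G"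
    hence "l \<in> Dset M (epsof (NF M G))" using K1[OF TU yV] NNG by simp
    hence lD: "l \<in> integer_flows M" "\<forall>e. l $ e = 0 \<or> l $ e = of_int (epsof (NF M G) e)"
      by (auto simp: Dset_def)
    have "l $ e = 0 \<or> l $ e = of_int (epsof (NF M F) e)" for e
    proof (cases "l $ e = 0")
      case False
      hence "e \<in> Sof (NF M G)" using l by (auto simp: Sof_def)
      thus ?thesis using lD(2) EE by metis
    qed simp
    hence "l \<in> Dset M (epsof (NF M F))" using lD(1) by (simp add: Dset_def)
    thus "l \<in> NF M F" using K1[OF TU xV] NNF by simp
  qed
  have "F = Fc M (NF M F)" using face_eq_Fc[OF TU] rx_facts[OF F] by blast
  also have "\<dots> \<subseteq> Fc M (NF M G)" using sub by (rule Fc_anti)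
  also have "\<dots> = G" using face_eq_Fc[OF TU] rx_facts[OF G] by metis
  finally show "F \<subseteq> G" .
qed

lemma phi_surj:
  fixes M :: "real^'e::finite^'r::finite"
  assumes TU: "totally_unimodular M" and sc: "Se \<in> SC M"
  shows "\<exists>G\<in>face_poset M. phiF M G = Se"
proof -
  obtain S \<epsilon> where Se: "Se = (S, \<epsilon>)" by (cases Se)
  obtain x0 where x0: "x0 \<in> voronoi_cell M 0" "Nx M x0 = Dset M \<epsilon>" "Sof (Dset M \<epsilon>) = S"
    "epsof (Dset M \<epsilon>) = \<epsilon>"
    using sc_point[OF TU sc[unfolded Se]] by blast
  define D where "D = Dset M \<epsilon>"
  define G where "G = Fc M D"
  have DI: "D \<subseteq> integer_flows M" by (auto simp: D_def Dset_def)
  have D0: "0 \<in> D" by (simp add: D_def Dset_def intf_0)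
  have Geq: "G = \<Inter> ((\<lambda>l. voronoi_cell M 0 \<inter> {y. inner (2 *\<^sub>R l) y = inner l l}) ` D)"
  proof -
    have "Gf y l = 0 \<longleftrightarrow> inner (2 *\<^sub>R l) y = inner l l" for y l
      by (auto simp: Gf_def inner_commute)
    thus ?thesis using D0 DI by (auto simp: G_def Fc_def Nx_def)
  qed
  have "G face_of voronoi_cell M 0"
    unfolding Geq
  proof (rule face_of_Inter)
    show "(\<lambda>l. voronoi_cell M 0 \<inter> {y. inner (2 *\<^sub>R l) y = inner l l}) ` D \<noteq> {}" using D0 by blast
    fix T assume "T \<in> (\<lambda>l. voronoi_cell M 0 \<inter> {y. inner (2 *\<^sub>R l) y = inner l l}) ` D"
    then obtain l where l: "l \<in> D" "T = voronoi_cell M 0 \<inter> {y. inner (2 *\<^sub>R l) y = inner l l}" by blast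
    have "inner (2 *\<^sub>R l) y \<le> inner l l" if "y \<in> voronoi_cell M 0" for y
    proof -
      have "Gf y l \<ge> 0" using that l DI voronoi_iff by blast
      thus ?thesis by (simp add: Gf_def inner_commute)
    qed
    thus "T face_of voronoi_cell M 0" unfolding l(2)
      by (intro face_of_Int_supporting_hyperplane_le V_convex) auto
  qed
  moreover have x0G: "x0 \<in> G" using x0 by (simp add: G_def Fc_def D_def)
  ultimately have GP: "G \<in> face_poset M" by (auto simp: face_poset_def)
  have "NF M G = D"
  proof
    show "NF M G \<subseteq> D" using x0G x0(2) by (auto simp: NF_def Nx_def D_def)
    show "D \<subseteq> NF M G" using DI by (auto simp: NF_def G_def Fc_def Nx_def)
  qed
  hence "phiF M G = Se" using x0 by (simp add: phiF_def Se D_def)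
  thus ?thesis using GP by blast
qed

theorem mainTheorem1:
  fixes M :: "real^'e::finite^'r::finite"
  assumes "totally_unimodular M"
  shows "\<exists>\<phi>. bij_betw \<phi> (face_poset M) (SC M) \<and>
           (\<forall>F\<in>face_poset M. \<forall>G\<in>face_poset M. F \<subseteq> G \<longleftrightarrow> sc_le (\<phi> F) (\<phi> G)) \<and>
           (\<forall>F\<in>face_poset M. int (genus M) - aff_dim F = int (sub_genus M (\<phi> F)))"
proof (intro exI conjI ballI)
  note TU = assms
  show ord: "F \<subseteq> G \<longleftrightarrow> sc_le (phiF M F) (phiF M G)" if "F \<in> face_poset M" "G \<in> face_poset M" for F G
    using phi_order[OF TU that] .
  show "bij_betw (phiF M) (face_poset M) (SC M)"
    unfolding bij_betw_def
  proof
    show "inj_on (phiF M) (face_poset M)"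
    proof (rule inj_onI)
      fix F G assume F: "F \<in> face_poset M" and G: "G \<in> face_poset M" and eq: "phiF M F = phiF M G"
      have r: "sc_le (phiF M F) (phiF M F)" by (simp add: sc_le_def)
      have "F \<subseteq> G" using phi_order[OF TU F G] eq r by simp
      moreover have "G \<subseteq> F" using phi_order[OF TU G F] eq r by simp
      ultimately show "F = G" by blast
    qed
    show "phiF M ` face_poset M = SC M"
      using phi_in_SC[OF TU] phi_surj[OF TU] by blast
  qed
  fix F assume F: "F \<in> face_poset M"
  have ad: "aff_dim F = int (genus M) - int (dim (Fsub M (Sof (Nx M (rx F)))))"
    using face_dim[OF TU] rx_facts[OF F] by blast
  have "sub_genus M (phiF M F) = dim (Fsub M (Sof (Nx M (rx F))))"
    using rx_facts(4)[OF F] by (simp add: sub_genus_def phiF_def Fsub_def)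
  thus "int (genus M) - aff_dim F = int (sub_genus M (phiF M F))" using ad by simp
qed


end
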